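(* Let $p,q\in(0,1)$. There exist constants $C, C'>0$, where $C$ depends only on $p$ and $q$, such that the following holds. Let $0<\varepsilon,\delta<1$ and let $n$ be a positive integer with $$n \ge C\log\!\left(\frac{C'}{\varepsilon\delta}\right).$$ Let $X_1,\dots,X_n$ be independent random variables uniformly distributed on $[-1,1]$, let $M_1,\dots,M_n$ be independent Bernoulli random variables with $\mathbb{P}(M_i=1)=p$, and let $M'_1,\dots,M'_n$ be independent Bernoulli random variables with $\mathbb{P}(M'_i=1)=q$, all of the $X_i, M_j, M'_k$ being mutually independent. Then, with probability at least $1-\delta$, for every $z\in[-1,1]$ there exists a set of indices $I\subseteq\{1,\dots,n\}$ such that $$\Big|\,z-\sum_{i=1}^{n} M_iM'_iX_i-\sum_{i\in I}M_i(1-M'_i)X_i\,\Big|\le\varepsilon .$$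
   Context: Interpretation: $M_i=0$ means the variable $X_i$ is permanently pruned (never usable); $M_i=1, M'_i=1$ means $X_i$ is locked (always included in the sum); $M_i=1, M'_i=0$ means $X_i$ is free and may be included or excluded via the chosen subset $I$. *)

theory Defs
  imports "HOL-Probability.Probability"
begin

text \<open>The Bernoulli value True encodes 1, False encodes 0.\<close>
definition coord_distr :: "real \<Rightarrow> real \<Rightarrow> (real \<times> bool \<times> bool) measure" where
  "coord_distr p q =
     uniform_measure lborel {-1..1::real} \<Otimes>\<^sub>M
       (measure_pmf (bernoulli_pmf p) \<Otimes>\<^sub>M measure_pmf (bernoulli_pmf q))"

definition sample_space :: "real \<Rightarrow> real \<Rightarrow> nat \<Rightarrow> (nat \<Rightarrow> real \<times> bool \<times> bool) measure" where
  "sample_space p q n = PiM {..<n} (\<lambda>_. coord_distr p q)"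

definition Xv :: "(nat \<Rightarrow> real \<times> bool \<times> bool) \<Rightarrow> nat \<Rightarrow> real" where
  "Xv \<omega> i = fst (\<omega> i)"
definition Mv :: "(nat \<Rightarrow> real \<times> bool \<times> bool) \<Rightarrow> nat \<Rightarrow> real" where
  "Mv \<omega> i = of_bool (fst (snd (\<omega> i)))"
definition M'v :: "(nat \<Rightarrow> real \<times> bool \<times> bool) \<Rightarrow> nat \<Rightarrow> real" where
  "M'v \<omega> i = of_bool (snd (snd (\<omega> i)))"

end

theory Submission
  imports Defs
begin


lemma prob_coord: "0 \<le> p \<Longrightarrow> p \<le> 1 \<Longrightarrow> 0 \<le> q \<Longrightarrow> q \<le> 1 \<Longrightarrow> prob_space (coord_distr p q)"
  unfolding coord_distr_def
  by (intro prob_space_pair prob_space_uniform_measure prob_space_measure_pmf) auto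

lemma sets_BB: "sets (measure_pmf (A::bool pmf) \<Otimes>\<^sub>M measure_pmf (B::bool pmf)) = UNIV"
proof -
  have "sets (measure_pmf A \<Otimes>\<^sub>M measure_pmf B) = sets (count_space (UNIV::bool set) \<Otimes>\<^sub>M count_space (UNIV::bool set))"
    by (intro sets_pair_measure_cong) auto
  also have "\<dots> = UNIV" by (subst pair_measure_countable) auto
  finally show ?thesis .
qed

lemma meas_BB: "f \<in> measurable (measure_pmf (A::bool pmf) \<Otimes>\<^sub>M measure_pmf (B::bool pmf)) N \<longleftrightarrow> f \<in> UNIV \<rightarrow> space N"
  unfolding measurable_def using sets_BB by (auto simp: space_pair_measure)

lemma nn_bern: "0 < p \<Longrightarrow> p < 1 \<Longrightarrow> (\<integral>\<^sup>+b. f b \<partial>measure_pmf (bernoulli_pmf p)) = ennreal p * f True + ennreal (1-p) * f False"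
  by (subst nn_integral_measure_pmf_finite) (auto simp: UNIV_bool mult.commute)

lemma nn_coord:
  assumes p: "0 < p" "p < 1" and q: "0 < q" "q < 1"
  and f[measurable]: "f \<in> borel_measurable (coord_distr p q)"
  shows "(\<integral>\<^sup>+y. f y \<partial>coord_distr p q) =
    (\<integral>\<^sup>+x. (ennreal (p*q) * f (x,True,True) + ennreal (p*(1-q)) * f (x,True,False)
       + ennreal ((1-p)*q) * f (x,False,True) + ennreal ((1-p)*(1-q)) * f (x,False,False))
        * indicator {-1..1} x \<partial>lborel) / 2" (is "_ = ?R")
proof -
  let ?U = "uniform_measure lborel {-1..1::real}"
  let ?B = "measure_pmf (bernoulli_pmf p) \<Otimes>\<^sub>M measure_pmf (bernoulli_pmf q)"
  interpret U: prob_space ?U by (intro prob_space_uniform_measure) auto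
  interpret B: pair_prob_space "measure_pmf (bernoulli_pmf p)" "measure_pmf (bernoulli_pmf q)" 
    by unfold_locales
  have PB: "prob_space ?B" by (intro prob_space_pair prob_space_measure_pmf)
  interpret UB: pair_prob_space ?U ?B by unfold_locales
  have fm: "f \<in> borel_measurable (?U \<Otimes>\<^sub>M ?B)" using f unfolding coord_distr_def .
  have fx[measurable]: "(\<lambda>x. f (x,b1,b2)) \<in> borel_measurable borel" for b1 b2
  proof -
    have "(\<lambda>x::real. (x,(b1,b2))) \<in> measurable borel (?U \<Otimes>\<^sub>M ?B)"
      by (intro measurable_Pair) (auto simp: meas_BB measurable_ident_sets)
    then show ?thesis by (rule measurable_compose[OF _ fm])
  qed
  have "(\<integral>\<^sup>+y. f y \<partial>coord_distr p q) = (\<integral>\<^sup>+x. \<integral>\<^sup>+bb. f (x,bb) \<partial>?B \<partial>?U)"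
    unfolding coord_distr_def by (rule sigma_finite_measure.nn_integral_fst[symmetric, OF prob_space_imp_sigma_finite[OF PB] fm])
  also have "\<dots> = (\<integral>\<^sup>+x. (ennreal (p*q) * f (x,True,True) + ennreal (p*(1-q)) * f (x,True,False)
       + ennreal ((1-p)*q) * f (x,False,True) + ennreal ((1-p)*(1-q)) * f (x,False,False)) \<partial>?U)"
  proof (rule nn_integral_cong)
    fix x
    have "(\<integral>\<^sup>+bb. f (x,bb) \<partial>?B) = (\<integral>\<^sup>+b1. \<integral>\<^sup>+b2. f (x,b1,b2) \<partial>measure_pmf (bernoulli_pmf q) \<partial>measure_pmf (bernoulli_pmf p))"
      by (rule sigma_finite_measure.nn_integral_fst[symmetric, OF prob_space_imp_sigma_finite]) (simp_all add: prob_space_measure_pmf meas_BB)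
    also have "\<dots> = (ennreal (p*q) * f (x,True,True) + ennreal (p*(1-q)) * f (x,True,False)
       + ennreal ((1-p)*q) * f (x,False,True) + ennreal ((1-p)*(1-q)) * f (x,False,False))"
      using p q by (simp add: nn_bern distrib_left distrib_right ennreal_mult mult_ac add.assoc)
    finally show "(\<integral>\<^sup>+bb. f (x,bb) \<partial>?B) = \<dots>" .
  qed
  also have "\<dots> = ?R"
    by (subst nn_integral_uniform_measure) (auto simp: mult.commute)
  finally show ?thesis .
qed



lemma pred_snd_CD[measurable]: "Measurable.pred (coord_distr p q) (\<lambda>y. snd y = c)"
proof -
  have "(\<lambda>y. snd y) \<in> measurable (coord_distr p q) (measure_pmf (bernoulli_pmf p) \<Otimes>\<^sub>M measure_pmf (bernoulli_pmf q))"
    unfolding coord_distr_def by simp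
  moreover have "Measurable.pred (measure_pmf (bernoulli_pmf p) \<Otimes>\<^sub>M measure_pmf (bernoulli_pmf q)) (\<lambda>b. b = c)"
    unfolding pred_def using sets_BB by auto
  ultimately show ?thesis by (rule measurable_compose)
qed

lemma fst_CD[measurable]: "(\<lambda>y. fst y) \<in> borel_measurable (coord_distr p q)"
proof -
  have "(\<lambda>y. fst y) \<in> measurable (coord_distr p q) (uniform_measure lborel {-1..1::real})"
    unfolding coord_distr_def by simp
  moreover have "(\<lambda>x. x) \<in> measurable (uniform_measure lborel {-1..1::real}) borel"
    by (simp add: measurable_ident_sets)
  ultimately show ?thesis by (rule measurable_compose)
qed

lemma meas_CD_I:
  fixes f :: "real \<times> bool \<times> bool \<Rightarrow> 'b::topological_space"
  assumes "\<And>b1 b2. (\<lambda>x. f (x,b1,b2)) \<in> borel_measurable borel"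
  shows "f \<in> borel_measurable (coord_distr p q)"
proof -
  have [measurable]: "(\<lambda>y. f (fst y, b1, b2)) \<in> borel_measurable (coord_distr p q)" for b1 b2
    using measurable_compose[OF fst_CD assms] .
  have e: "f = (\<lambda>y. if snd y = (True,True) then f (fst y, True, True) else
     if snd y = (True,False) then f (fst y, True, False) else
     if snd y = (False,True) then f (fst y, False, True) else f (fst y, False, False))"
    by (auto simp: fun_eq_iff)
  show ?thesis by (subst e) measurable
qed



locale pq =
  fixes p q :: real
  assumes p0: "0 < p" and p1: "p < 1" and q0: "0 < q" and q1: "q < 1"
begin

abbreviation "CD \<equiv> coord_distr p q"
abbreviation "SS n \<equiv> sample_space p q n"

lemma prob_CD: "prob_space CD" using prob_coord p0 p1 q0 q1 by auto

sublocale P: product_prob_space "\<lambda>_::nat. CD"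
  by (intro product_prob_spaceI prob_CD)

lemma prob_SS: "prob_space (SS n)"
  unfolding sample_space_def by (intro prob_space_PiM prob_CD) 

lemma step_int:
  assumes k: "k < n"
  and [measurable]: "F \<in> borel_measurable (SS n)" "G \<in> borel_measurable (SS n)"
  and st: "\<And>w. w \<in> space (PiM ({..<n}-{k}) (\<lambda>_. CD)) \<Longrightarrow>
      (\<integral>\<^sup>+y. G (w(k:=y)) \<partial>CD) \<le> c * (\<integral>\<^sup>+y. F (w(k:=y)) \<partial>CD)"
  shows "(\<integral>\<^sup>+w. G w \<partial>SS n) \<le> c * (\<integral>\<^sup>+w. F w \<partial>SS n)"
proof -
  have ins: "{..<n} = insert k ({..<n}-{k})" using k by auto
  have Gm: "G \<in> borel_measurable (PiM (insert k ({..<n}-{k})) (\<lambda>_. CD))"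
    using assms(3) unfolding sample_space_def by (subst ins[symmetric])
  have Fm: "F \<in> borel_measurable (PiM (insert k ({..<n}-{k})) (\<lambda>_. CD))"
    using assms(2) unfolding sample_space_def by (subst ins[symmetric])
  have "(\<integral>\<^sup>+w. G w \<partial>SS n) = (\<integral>\<^sup>+w. (\<integral>\<^sup>+y. G (w(k:=y)) \<partial>CD) \<partial>PiM ({..<n}-{k}) (\<lambda>_. CD))"
    unfolding sample_space_def by (subst ins, rule P.product_nn_integral_insert[OF _ _ Gm]) auto
  also have "\<dots> \<le> (\<integral>\<^sup>+w. c * (\<integral>\<^sup>+y. F (w(k:=y)) \<partial>CD) \<partial>PiM ({..<n}-{k}) (\<lambda>_. CD))"
    by (intro nn_integral_mono st)
  also have "\<dots> = c * (\<integral>\<^sup>+w. (\<integral>\<^sup>+y. F (w(k:=y)) \<partial>CD) \<partial>PiM ({..<n}-{k}) (\<lambda>_. CD))"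
  proof (rule nn_integral_cmult)
    show "(\<lambda>w. \<integral>\<^sup>+ y. F (w(k := y)) \<partial>CD) \<in> borel_measurable (PiM ({..<n}-{k}) (\<lambda>_. CD))"
    proof -
      have "(\<lambda>(w,y). F (w(k:=y))) \<in> borel_measurable (PiM ({..<n}-{k}) (\<lambda>_. CD) \<Otimes>\<^sub>M CD)"
        using measurable_compose[OF measurable_add_dim Fm] by (simp add: case_prod_beta')
      from sigma_finite_measure.borel_measurable_nn_integral_fst[OF prob_space_imp_sigma_finite[OF prob_CD] this]
      show ?thesis by simp
    qed
  qed
  also have "(\<integral>\<^sup>+w. (\<integral>\<^sup>+y. F (w(k:=y)) \<partial>CD) \<partial>PiM ({..<n}-{k}) (\<lambda>_. CD)) = (\<integral>\<^sup>+w. F w \<partial>SS n)"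
    unfolding sample_space_def by (subst ins, rule P.product_nn_integral_insert[OF _ _ Fm, symmetric]) auto
  finally show ?thesis .
qed

end


definition WW :: "real set" where "WW = {-1/2..1/2}"
lemma WW_sets[measurable]: "WW \<in> sets borel" unfolding WW_def by simp
lemma emeasure_WW: "emeasure lborel WW = 1" unfolding WW_def by simp

lemma lborel_refl_trans:
  assumes A[measurable]: "A \<in> sets borel"
  shows "emeasure lborel {x::real. z - x \<in> A} = emeasure lborel A"
proof -
  have B[measurable]: "{x::real. z + x \<in> A} \<in> sets borel" by measurable
  have "emeasure lborel A = emeasure (distr lborel borel ((+) z)) A"
    by (simp add: lborel_distr_plus)
  also have "\<dots> = emeasure lborel {x. z + x \<in> A}"
    by (subst emeasure_distr) (auto intro!: arg_cong[where f="emeasure lborel"])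
  also have "\<dots> = emeasure (distr lborel borel uminus) {x. z + x \<in> A}"
    by (simp add: lborel_distr_uminus)
  also have "\<dots> = emeasure lborel {x. z - x \<in> A}"
    by (subst emeasure_distr) (auto intro!: arg_cong[where f="emeasure lborel"])
  finally show ?thesis ..
qed

lemma lborel_trans:
  assumes A[measurable]: "A \<in> sets borel"
  shows "emeasure lborel {x::real. x - y \<in> A} = emeasure lborel A"
proof -
  have "emeasure lborel A = emeasure (distr lborel borel ((+) (-y))) A"
    by (simp add: lborel_distr_plus)
  also have "\<dots> = emeasure lborel {x. x - y \<in> A}"
    by (subst emeasure_distr) (auto intro!: arg_cong[where f="emeasure lborel"])
  finally show ?thesis ..
qed

definition DD :: "real set \<Rightarrow> real \<Rightarrow> real set" where
  "DD C y = {z \<in> WW. z - y \<in> C \<inter> WW \<and> z \<notin> C}"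

lemma DD_sets[measurable]: assumes [measurable]: "C \<in> sets borel" shows "DD C y \<in> sets borel"
  unfolding DD_def by measurable

lemma DD_le: assumes [measurable]: "C \<in> sets borel" shows "emeasure lborel (DD C y) \<le> emeasure lborel (C \<inter> WW)"
proof -
  have "emeasure lborel (DD C y) \<le> emeasure lborel {z. z - y \<in> C \<inter> WW}"
    by (intro emeasure_mono) (auto simp: DD_def)
  also have "\<dots> = emeasure lborel (C \<inter> WW)" by (rule lborel_trans) measurable
  finally show ?thesis .
qed

lemma DD_int:
  assumes C[measurable]: "C \<in> sets borel"
  shows "(\<integral>\<^sup>+y. emeasure lborel (DD C y) * indicator {-1..1} y \<partial>lborel)
     = emeasure lborel (C \<inter> WW) * emeasure lborel (WW - C)"
proof -
  let ?f = "\<lambda>y z. indicator WW z * indicator (C \<inter> WW) (z - y) * indicator (-C) z * indicator {-1..1::real} y :: ennreal"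
  have fm[measurable]: "(\<lambda>(y,z). ?f y z) \<in> borel_measurable (lborel \<Otimes>\<^sub>M lborel)"
    by measurable
  have "(\<integral>\<^sup>+y. emeasure lborel (DD C y) * indicator {-1..1} y \<partial>lborel) = (\<integral>\<^sup>+y. \<integral>\<^sup>+z. ?f y z \<partial>lborel \<partial>lborel)"
  proof (rule nn_integral_cong)
    fix y :: real
    have "emeasure lborel (DD C y) = (\<integral>\<^sup>+z. indicator (DD C y) z \<partial>lborel)"
      by (simp add: DD_sets)
    also have "\<dots> = (\<integral>\<^sup>+z. indicator WW z * indicator (C \<inter> WW) (z - y) * indicator (-C) z \<partial>lborel)"
      by (intro nn_integral_cong) (auto simp: DD_def indicator_def)
    finally show "emeasure lborel (DD C y) * indicator {-1..1} y = (\<integral>\<^sup>+z. ?f y z \<partial>lborel)"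
      by (simp add: nn_integral_multc)
  qed
  also have "\<dots> = (\<integral>\<^sup>+z. \<integral>\<^sup>+y. ?f y z \<partial>lborel \<partial>lborel)"
    by (rule lborel_pair.Fubini') (simp add: fm)
  also have "\<dots> = (\<integral>\<^sup>+z. emeasure lborel (C \<inter> WW) * indicator (WW - C) z \<partial>lborel)"
  proof (rule nn_integral_cong)
    fix z :: real
    show "(\<integral>\<^sup>+y. ?f y z \<partial>lborel) = emeasure lborel (C \<inter> WW) * indicator (WW - C) z"
    proof (cases "z \<in> WW - C")
      case True
      have "(\<integral>\<^sup>+y. ?f y z \<partial>lborel) = (\<integral>\<^sup>+y. indicator {y. z - y \<in> C \<inter> WW} y \<partial>lborel)"
      proof (intro nn_integral_cong)
        fix y
        have "z - y \<in> C \<inter> WW \<Longrightarrow> y \<in> {-1..1}" using True unfolding WW_def by auto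
        then show "?f y z = indicator {y. z - y \<in> C \<inter> WW} y"
          using True by (auto simp: indicator_def)
      qed
      also have "\<dots> = emeasure lborel {y. z - y \<in> C \<inter> WW}"
        by (intro nn_integral_indicator) measurable
      also have "\<dots> = emeasure lborel (C \<inter> WW)"
        by (rule lborel_refl_trans) measurable
      finally show ?thesis using True by simp
    next
      case False
      then have "?f y z = 0" for y by (auto simp: indicator_def)
      then have "(\<lambda>y. ?f y z) = (\<lambda>y. 0)" by (rule ext)
      then show ?thesis using False by (simp del: nn_integral_indicator_singleton)
    qed
  qed
  also have "\<dots> = emeasure lborel (C \<inter> WW) * emeasure lborel (WW - C)"
    by (subst nn_integral_cmult) auto
  finally show ?thesis .
qed


definition Yv :: "(nat \<Rightarrow> real \<times> bool \<times> bool) \<Rightarrow> nat \<Rightarrow> real" where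
  "Yv w i = Mv w i * (1 - M'v w i) * Xv w i"

definition Cov :: "real \<Rightarrow> nat \<Rightarrow> (nat \<Rightarrow> real \<times> bool \<times> bool) \<Rightarrow> real set" where
  "Cov e k w = {z. \<exists>I\<in>Pow {..<k}. \<bar>z - (\<Sum>i\<in>I. Yv w i)\<bar> \<le> e}"


definition aa :: "real \<Rightarrow> nat \<Rightarrow> (nat \<Rightarrow> real \<times> bool \<times> bool) \<Rightarrow> real" where
  "aa e k w = measure lborel (Cov e k w \<inter> WW)"

lemma Yv_upd: "i \<noteq> j \<Longrightarrow> Yv (w(j:=y)) i = Yv w i"
  by (simp add: Yv_def Mv_def M'v_def Xv_def)

lemma Cov_upd: "k \<le> j \<Longrightarrow> Cov e k (w(j:=y)) = Cov e k w"
proof -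
  assume "k \<le> j"
  then have "I \<in> Pow {..<k} \<Longrightarrow> (\<Sum>i\<in>I. Yv (w(j:=y)) i) = (\<Sum>i\<in>I. Yv w i)" for I
    by (intro sum.cong refl Yv_upd) auto
  then show ?thesis unfolding Cov_def by auto
qed

lemma Cov_Suc: "z \<in> Cov e (Suc k) w \<longleftrightarrow> z \<in> Cov e k w \<or> z - Yv w k \<in> Cov e k w"
proof
  assume "z \<in> Cov e (Suc k) w"
  then obtain I where I: "I \<subseteq> {..<Suc k}" "\<bar>z - (\<Sum>i\<in>I. Yv w i)\<bar> \<le> e" unfolding Cov_def by auto
  show "z \<in> Cov e k w \<or> z - Yv w k \<in> Cov e k w"
  proof (cases "k \<in> I")
    case True
    let ?J = "I - {k}"
    have "?J \<subseteq> {..<k}" using I by auto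
    moreover have "(\<Sum>i\<in>I. Yv w i) = Yv w k + (\<Sum>i\<in>?J. Yv w i)"
      using True I(1) by (subst sum.remove[of I k]) (auto intro: finite_subset)
    ultimately show ?thesis using I(2) unfolding Cov_def by (auto simp: algebra_simps)
  next
    case False
    then have "I \<subseteq> {..<k}" using I by (auto simp: less_Suc_eq)
    then show ?thesis using I(2) unfolding Cov_def by auto
  qed
next
  assume "z \<in> Cov e k w \<or> z - Yv w k \<in> Cov e k w"
  then show "z \<in> Cov e (Suc k) w"
  proof
    assume "z \<in> Cov e k w"
    then obtain I where I: "I \<subseteq> {..<k}" "\<bar>z - (\<Sum>i\<in>I. Yv w i)\<bar> \<le> e" unfolding Cov_def by auto
    have "I \<in> Pow {..<Suc k}" using I(1) by auto
    then show ?thesis unfolding Cov_def using I(2) by (intro CollectI bexI[of _ I])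
  next
    assume "z - Yv w k \<in> Cov e k w"
    then obtain J where J: "J \<subseteq> {..<k}" "\<bar>z - Yv w k - (\<Sum>i\<in>J. Yv w i)\<bar> \<le> e" unfolding Cov_def by auto
    have "(\<Sum>i\<in>insert k J. Yv w i) = Yv w k + (\<Sum>i\<in>J. Yv w i)"
      using J(1) by (subst sum.insert) (auto intro: finite_subset)
    moreover have "insert k J \<subseteq> {..<Suc k}" using J(1) by auto
    ultimately show ?thesis using J(2) unfolding Cov_def by (auto simp: algebra_simps intro!: bexI[of _ "insert k J"])
  qed
qed

lemma Cov_0: "{-e..e} \<subseteq> Cov e k w"
  unfolding Cov_def by (auto intro!: bexI[of _ "{}"])

lemma Cov_closed: "closed (Cov e k w)"
proof -
  have "Cov e k w = (\<Union>I\<in>Pow {..<k}. {z. \<bar>z - (\<Sum>i\<in>I. Yv w i)\<bar> \<le> e})" by (auto simp: Cov_def)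
  moreover have "closed (\<Union>I\<in>Pow {..<k}. {z. \<bar>z - (\<Sum>i\<in>I. Yv w i)\<bar> \<le> e})"
    by (intro closed_UN) (auto intro!: closed_Collect_le continuous_intros)
  ultimately show ?thesis by simp
qed

lemma Cov_sets[measurable]: "Cov e k w \<in> sets borel"
  by (rule borel_closed[OF Cov_closed])


context pq begin

lemma Yv_meas[measurable]: "i < n \<Longrightarrow> (\<lambda>w. Yv w i) \<in> borel_measurable (SS n)"
proof -
  assume i: "i < n"
  have "(\<lambda>w. w i) \<in> measurable (SS n) CD"
    unfolding sample_space_def using i by (intro measurable_component_singleton) auto
  moreover have "(\<lambda>y. of_bool (fst (snd y)) * (1 - of_bool (snd (snd y))) * fst y :: real) \<in> borel_measurable CD"
    by (intro meas_CD_I) auto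
  ultimately show ?thesis unfolding Yv_def Mv_def M'v_def Xv_def
    by (rule measurable_compose[where f="\<lambda>w. w i", unfolded o_def])
qed

end


lemma WW_fm: "WW \<in> fmeasurable lborel"
  unfolding WW_def by (intro fmeasurableI) auto

lemma fm_WW: "A \<in> sets borel \<Longrightarrow> A \<subseteq> WW \<Longrightarrow> A \<in> fmeasurable lborel"
  by (rule fmeasurableI2[OF WW_fm]) auto

lemma DD_meas[measurable]:
  assumes C[measurable]: "C \<in> sets borel"
  shows "(\<lambda>x. emeasure lborel (DD C x)) \<in> borel_measurable borel"
proof -
  let ?O = "{xz::real\<times>real. snd xz \<in> WW \<and> snd xz - fst xz \<in> C \<inter> WW \<and> snd xz \<notin> C}"
  have "Measurable.pred (borel \<Otimes>\<^sub>M lborel) (\<lambda>xz::real\<times>real. snd xz \<in> WW \<and> snd xz - fst xz \<in> C \<inter> WW \<and> snd xz \<notin> C)"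
    by measurable
  then have "?O \<in> sets (borel \<Otimes>\<^sub>M lborel)" unfolding pred_def by (simp add: space_pair_measure)
  from lborel.measurable_emeasure_Pair[OF this]
  have m: "(\<lambda>x. emeasure lborel (Pair x -` ?O)) \<in> borel_measurable borel" .
  have eq: "(\<lambda>x. emeasure lborel (Pair x -` ?O)) = (\<lambda>x. emeasure lborel (DD C x))"
    by (rule ext, rule arg_cong[where f="emeasure lborel"]) (auto simp: DD_def)
  show ?thesis using m unfolding eq .
qed

lemma enn_aux:
  assumes "X + ennreal c \<le> ennreal P" "0 \<le> c"
  shows "X \<le> ennreal (P - c)"
proof -
  have "X \<noteq> \<infinity>" using assms(1) by (auto simp: top_unique)
  then obtain x where x: "X = ennreal x" "0 \<le> x" by (cases X) auto
  have "ennreal (x + c) \<le> ennreal P" using assms x by (simp add: ennreal_plus)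
  show ?thesis
  proof (cases "0 \<le> P")
    case True
    then have "x + c \<le> P" using \<open>ennreal (x + c) \<le> ennreal P\<close> by (simp add: ennreal_le_iff)
    then show ?thesis using x by (auto intro: ennreal_leI)
  next
    case False
    then have "ennreal (x + c) \<le> 0" using \<open>ennreal (x + c) \<le> ennreal P\<close> ennreal_neg[of P] by simp
    then have "x + c \<le> 0" by (simp add: ennreal_eq_0_iff)
    then have "x = 0" using x assms(2) by simp
    then show ?thesis using x by simp
  qed
qed

definition Phi :: "real \<Rightarrow> real" where "Phi a = 1/a - 1"

lemma Phi_step:
  assumes "0 < a" "0 \<le> d" "d \<le> a" "a + d \<le> a'"
  shows "Phi a' \<le> Phi a - d / (2*a^2)"
proof -
  have ad: "a + d > 0" "a*(a+d) > 0" using assms by auto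
  have e: "1/(a+d) = 1/a - d/(a*(a+d))" using ad assms(1) by (simp add: field_simps)
  have "1/a' \<le> 1/(a+d)" using assms by (intro divide_left_mono) auto
  also have "\<dots> = 1/a - d/(a*(a+d))" by (rule e)
  also have "\<dots> \<le> 1/a - d/(2*a^2)"
    using assms by (intro diff_left_mono divide_left_mono) (auto simp: power2_eq_square intro: mult_pos_pos)
  finally show ?thesis unfolding Phi_def by simp
qed

context pq begin

lemma Cov_pair_sets:
  assumes "k \<le> n"
  shows "{x \<in> space (SS n \<Otimes>\<^sub>M lborel). snd x \<in> Cov e k (fst x) \<inter> WW} \<in> sets (SS n \<Otimes>\<^sub>M lborel)"
proof -
  have "{x \<in> space (SS n \<Otimes>\<^sub>M lborel). snd x \<in> Cov e k (fst x) \<inter> WW} =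
     (\<Union>I\<in>Pow {..<k}. {x \<in> space (SS n \<Otimes>\<^sub>M lborel). \<bar>snd x - (\<Sum>i\<in>I. Yv (fst x) i)\<bar> \<le> e \<and> snd x \<in> WW})"
    by (auto simp: Cov_def)
  also have "\<dots> \<in> sets (SS n \<Otimes>\<^sub>M lborel)"
  proof (intro sets.finite_UN)
    fix I assume "I \<in> Pow {..<k}"
    then have I: "i \<in> I \<Longrightarrow> i < n" for i using assms by auto
    have [measurable]: "(\<lambda>x. \<Sum>i\<in>I. Yv (fst x) i) \<in> borel_measurable (SS n \<Otimes>\<^sub>M lborel)"
      by (intro borel_measurable_sum measurable_compose[OF measurable_fst Yv_meas] I)
    show "{x \<in> space (SS n \<Otimes>\<^sub>M lborel). \<bar>snd x - (\<Sum>i\<in>I. Yv (fst x) i)\<bar> \<le> e \<and> snd x \<in> WW} \<in> sets (SS n \<Otimes>\<^sub>M lborel)"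
      by measurable
  qed auto
  finally show ?thesis .
qed

lemma aa_meas[measurable]:
  assumes "k \<le> n"
  shows "(\<lambda>w. aa e k w) \<in> borel_measurable (SS n)"
proof -
  let ?O = "{x \<in> space (SS n \<Otimes>\<^sub>M lborel). snd x \<in> Cov e k (fst x) \<inter> WW}"
  have "(\<lambda>w. emeasure lborel (Pair w -` ?O)) \<in> borel_measurable (SS n)"
    by (rule lborel.measurable_emeasure_Pair[OF Cov_pair_sets[OF assms]])
  then have "(\<lambda>w. enn2real (emeasure lborel (Pair w -` ?O))) \<in> borel_measurable (SS n)" by measurable
  moreover have "w \<in> space (SS n) \<Longrightarrow> enn2real (emeasure lborel (Pair w -` ?O)) = aa e k w" for w
    by (auto simp: aa_def measure_def space_pair_measure intro!: arg_cong[where f="\<lambda>A. enn2real (emeasure lborel A)"])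
  ultimately show ?thesis by (rule measurable_cong[THEN iffD1, rotated])
qed

lemma aa_bounds:
  assumes "0 < e" "e \<le> 1/2"
  shows "2*e \<le> aa e k w" "aa e k w \<le> 1"
proof -
  have s: "Cov e k w \<inter> WW \<in> fmeasurable lborel" by (rule fm_WW) auto
  have "{-e..e} \<subseteq> Cov e k w \<inter> WW" using Cov_0[of e k w] assms unfolding WW_def by auto
  then have "measure lborel {-e..e} \<le> aa e k w" unfolding aa_def
    by (intro measure_mono_fmeasurable s) auto
  then show "2*e \<le> aa e k w" using assms by simp
  have "aa e k w \<le> measure lborel WW" unfolding aa_def
    by (intro measure_mono_fmeasurable WW_fm) auto
  then show "aa e k w \<le> 1" unfolding WW_def by simp
qed

end


lemma Phi_meas[measurable]: "Phi \<in> borel_measurable borel"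
  unfolding Phi_def by measurable

context pq begin

lemma upd_meas:
  assumes k: "k < n" and w: "w \<in> space (PiM ({..<n}-{k}) (\<lambda>_. CD))"
  shows "(\<lambda>y. w(k:=y)) \<in> measurable CD (SS n)"
proof -
  have ins: "insert k ({..<n}-{k}) = {..<n}" using k by auto
  show ?thesis using measurable_component_update[OF w, of k] unfolding sample_space_def ins by simp
qed

lemma lueker_step:
  assumes e: "0 < e" "e \<le> 1/2" and k: "k < n" and w: "w \<in> space (PiM ({..<n}-{k}) (\<lambda>_. CD))"
  shows "(\<integral>\<^sup>+y. ennreal (Phi (aa e (Suc k) (w(k:=y)))) \<partial>CD)
     \<le> ennreal (1 - p*(1-q)/4) * (\<integral>\<^sup>+y. ennreal (Phi (aa e k (w(k:=y)))) \<partial>CD)"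
proof -
  have sp1: "emeasure CD (space CD) = 1" by (rule prob_space.emeasure_space_1[OF prob_CD])
  define C where "C = Cov e k w"
  define a where "a = aa e k w"
  have C_sets[measurable]: "C \<in> sets borel" unfolding C_def by simp
  have a_eq: "a = measure lborel (C \<inter> WW)" unfolding a_def aa_def C_def ..
  have ab: "2*e \<le> a" "a \<le> 1" unfolding a_def using aa_bounds[OF e] by auto
  then have a0: "0 < a" using e by simp
  have cov_upd: "Cov e k (w(k:=y)) = C" for y unfolding C_def by (rule Cov_upd) simp
  have aa_k: "aa e k (w(k:=y)) = a" for y unfolding aa_def a_def cov_upd C_def ..
  have RHS: "(\<integral>\<^sup>+y. ennreal (Phi (aa e k (w(k:=y)))) \<partial>CD) = ennreal (Phi a)"
    by (simp add: aa_k sp1)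
  define dm where "dm x = measure lborel (DD C x)" for x
  have DDW: "DD C x \<subseteq> WW" for x unfolding DD_def by auto
  have CWf: "emeasure lborel (C \<inter> WW) < \<infinity>"
    using fm_WW[of "C \<inter> WW"] by (auto simp: fmeasurable_def)
  have dm_le: "0 \<le> dm x" "dm x \<le> a" for x
    unfolding dm_def a_eq measure_def using DD_le[OF C_sets, of x] CWf
    by (auto intro: enn2real_mono)
  have dm_enn: "ennreal (dm x) = emeasure lborel (DD C x)" for x
  proof -
    have "emeasure lborel (DD C x) < \<infinity>" using fm_WW[OF DD_sets[OF C_sets] DDW] by (auto simp: fmeasurable_def)
    then show ?thesis unfolding dm_def measure_def by (simp add: ennreal_enn2real less_top)
  qed
  have Ysk: "Yv (w(k:=y)) k = (if fst (snd y) \<and> \<not> snd (snd y) then fst y else 0)" for y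
    by (simp add: Yv_def Mv_def M'v_def Xv_def)
  have cov_suc: "Cov e (Suc k) (w(k:=y)) = C \<union> {z. z - Yv (w(k:=y)) k \<in> C}" for y
    using Cov_Suc[of _ e k "w(k:=y)"] unfolding cov_upd by auto
  define g0 where "g0 y = (if fst (snd y) \<and> \<not> snd (snd y) then dm (fst y) else 0)" for y
  have key: "a + g0 y \<le> aa e (Suc k) (w(k:=y))" for y
  proof (cases "fst (snd y) \<and> \<not> snd (snd y)")
    case True
    have sub: "(C \<inter> WW) \<union> DD C (fst y) \<subseteq> Cov e (Suc k) (w(k:=y)) \<inter> WW"
      unfolding cov_suc Ysk using True by (auto simp: DD_def)
    have "a + g0 y = measure lborel ((C \<inter> WW) \<union> DD C (fst y))"
      unfolding g0_def dm_def a_eq using True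
      by (subst measure_Union) (auto simp: DD_def intro!: fmeasurableD2 fm_WW)
    also have "\<dots> \<le> aa e (Suc k) (w(k:=y))" unfolding aa_def
      by (intro measure_mono_fmeasurable sub fm_WW) auto
    finally show ?thesis .
  next
    case False
    then have "Cov e (Suc k) (w(k:=y)) = C" unfolding cov_suc Ysk by auto
    then show ?thesis using False unfolding g0_def a_def aa_def C_def by auto
  qed
  have g0b: "0 \<le> g0 y" "g0 y \<le> a" for y unfolding g0_def using dm_le a0 by auto
  have pt: "ennreal (Phi (aa e (Suc k) (w(k:=y)))) + ennreal (g0 y / (2*a^2)) \<le> ennreal (Phi a)" for y
  proof -
    have "Phi (aa e (Suc k) (w(k:=y))) \<le> Phi a - g0 y / (2*a^2)"
      by (rule Phi_step[OF a0 g0b key])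
    moreover have "0 \<le> Phi (aa e (Suc k) (w(k:=y)))"
      using aa_bounds[OF e, of "Suc k" "w(k:=y)"] e unfolding Phi_def by (simp add: field_simps)
    moreover have "0 \<le> g0 y / (2*a^2)" using g0b a0 by simp
    ultimately show ?thesis by (simp add: ennreal_plus[symmetric] del: ennreal_plus)
  qed
  have upd: "(\<lambda>y. w(k:=y)) \<in> measurable CD (SS n)" by (rule upd_meas[OF k w])
  have fmeas: "(\<lambda>y. ennreal (Phi (aa e (Suc k) (w(k:=y))))) \<in> borel_measurable CD"
    using measurable_compose[OF upd aa_meas[of "Suc k" n e]] k by simp
  have gmeas: "(\<lambda>y. ennreal (g0 y / (2*a^2))) \<in> borel_measurable CD"
  proof (intro meas_CD_I)
    fix b1 b2
    have [measurable]: "(\<lambda>x. dm x) \<in> borel_measurable borel"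
      unfolding dm_def measure_def by measurable
    have "(\<lambda>x. ennreal (dm x / (2*a^2))) \<in> borel_measurable borel" by measurable
    then show "(\<lambda>x. ennreal (g0 (x, b1, b2) / (2 * a\<^sup>2))) \<in> borel_measurable borel"
      by (cases "b1 \<and> \<not> b2") (auto simp: g0_def)
  qed
  have intg: "(\<integral>\<^sup>+y. ennreal (g0 y / (2*a^2)) \<partial>CD) = ennreal (p*(1-q)*(1-a)/(4*a))"
  proof -
    have "(\<integral>\<^sup>+y. ennreal (g0 y / (2*a^2)) \<partial>CD) =
      (\<integral>\<^sup>+x. ennreal (p*(1-q)/(2*a^2)) * (ennreal (dm x) * indicator {-1..1} x) \<partial>lborel) / 2"
      apply (subst nn_coord[OF p0 p1 q0 q1 gmeas])
      apply (simp add: g0_def ennreal_mult[symmetric] mult_ac)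
      apply (rule arg_cong[where f="\<lambda>X. X / 2"], rule nn_integral_cong)
      subgoal for x
        using dm_le[of x] p0 q1 a0 by (cases "x \<in> {-1..1}") (simp_all add: ennreal_mult[symmetric])
      done
    also have "\<dots> = ennreal (p*(1-q)/(2*a^2)) * (\<integral>\<^sup>+x. emeasure lborel (DD C x) * indicator {-1..1} x \<partial>lborel) / 2"
      by (subst nn_integral_cmult) (auto simp: dm_enn)
    also have "(\<integral>\<^sup>+x. emeasure lborel (DD C x) * indicator {-1..1} x \<partial>lborel) = ennreal a * ennreal (1 - a)"
    proof -
      have "emeasure lborel (WW - C) = emeasure lborel (WW - (C \<inter> WW))" by (rule arg_cong[where f="emeasure lborel"]) auto
      also have "\<dots> = emeasure lborel WW - emeasure lborel (C \<inter> WW)"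
        using CWf by (subst emeasure_Diff) (auto simp: emeasure_WW)
      also have "\<dots> = ennreal (1 - a)" 
        using a0 CWf by (simp add: emeasure_WW a_eq measure_def ennreal_enn2real less_top ennreal_minus[symmetric] del: ennreal_minus)
      finally have "emeasure lborel (WW - C) = ennreal (1 - a)" .
      moreover have "emeasure lborel (C \<inter> WW) = ennreal a"
        using CWf by (simp add: a_eq measure_def ennreal_enn2real less_top)
      ultimately show ?thesis using DD_int[OF C_sets] by simp
    qed
    also have "ennreal (p*(1-q)/(2*a^2)) * (ennreal a * ennreal (1 - a)) / 2 = ennreal (p*(1-q)*(1-a)/(4*a))"
    proof -
      have nn: "0 \<le> p*(1-q)/(2*a^2)" "0 \<le> 1 - a" "0 \<le> a" using p0 q1 a0 ab by auto
      have "ennreal (p*(1-q)/(2*a^2)) * (ennreal a * ennreal (1 - a)) = ennreal (p*(1-q)/(2*a^2) * (a * (1-a)))"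
        using nn by (simp only: ennreal_mult[symmetric] mult_nonneg_nonneg)
      also have "\<dots> / 2 = ennreal (p*(1-q)/(2*a^2) * (a * (1-a)) / 2)"
      proof -
        have "0 \<le> p*(1-q)*(a*(1-a))/(2*a^2)" using p0 q1 ab a0 by (intro divide_nonneg_nonneg mult_nonneg_nonneg) auto
        then show ?thesis using nn by (subst divide_ennreal[symmetric]) auto
      qed
      also have "p*(1-q)/(2*a^2) * (a * (1-a)) / 2 = p*(1-q)*(1-a)/(4*a)"
        using a0 by (simp add: field_simps power2_eq_square)
      finally show ?thesis .
    qed
    finally show ?thesis .
  qed
  have "(\<integral>\<^sup>+y. ennreal (Phi (aa e (Suc k) (w(k:=y)))) \<partial>CD) + ennreal (p*(1-q)*(1-a)/(4*a))
      = (\<integral>\<^sup>+y. ennreal (Phi (aa e (Suc k) (w(k:=y)))) + ennreal (g0 y / (2*a^2)) \<partial>CD)"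
    by (subst nn_integral_add[OF fmeas gmeas]) (simp add: intg)
  also have "\<dots> \<le> (\<integral>\<^sup>+y. ennreal (Phi a) \<partial>CD)"
    by (intro nn_integral_mono pt)
  also have "\<dots> = ennreal (Phi a)" by (simp add: sp1)
  finally have "(\<integral>\<^sup>+y. ennreal (Phi (aa e (Suc k) (w(k:=y)))) \<partial>CD) \<le> ennreal (Phi a - p*(1-q)*(1-a)/(4*a))"
    by (rule enn_aux) (use a0 ab p0 q1 in simp)
  also have "Phi a - p*(1-q)*(1-a)/(4*a) = (1 - p*(1-q)/4) * Phi a"
    using a0 unfolding Phi_def by (simp add: field_simps)
  also have "ennreal \<dots> = ennreal (1 - p*(1-q)/4) * ennreal (Phi a)"
  proof -
    have "p*(1-q) \<le> 1*1" using p0 p1 q0 q1 by (intro mult_mono) auto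
    moreover have "0 \<le> Phi a" using a0 ab unfolding Phi_def by (simp add: field_simps)
    ultimately show ?thesis by (simp add: ennreal_mult)
  qed
  finally show ?thesis unfolding RHS .
qed

end


context pq begin

lemma lueker_int:
  assumes e: "0 < e" "e \<le> 1/2" and m: "m \<le> n"
  shows "(\<integral>\<^sup>+w. ennreal (Phi (aa e m w)) \<partial>SS n) \<le> ennreal (1 - p*(1-q)/4) ^ m * ennreal (1/(2*e))"
  using m
proof (induction m)
  case 0
  have "(\<integral>\<^sup>+w. ennreal (Phi (aa e 0 w)) \<partial>SS n) \<le> (\<integral>\<^sup>+w. ennreal (1/(2*e)) \<partial>SS n)"
  proof (intro nn_integral_mono ennreal_leI)
    fix w
    have "2*e \<le> aa e 0 w" by (rule aa_bounds[OF e])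
    then have "1 / aa e 0 w \<le> 1/(2*e)" using e by (intro divide_left_mono) auto
    then show "Phi (aa e 0 w) \<le> 1/(2*e)" unfolding Phi_def by simp
  qed
  also have "\<dots> = ennreal (1/(2*e))"
    using prob_space.emeasure_space_1[OF prob_SS[of n]] by simp
  finally show ?case by simp
next
  case (Suc m)
  then have mn: "m < n" by simp
  have "(\<integral>\<^sup>+w. ennreal (Phi (aa e (Suc m) w)) \<partial>SS n) \<le> ennreal (1 - p*(1-q)/4) * (\<integral>\<^sup>+w. ennreal (Phi (aa e m w)) \<partial>SS n)"
  proof (rule step_int[OF mn])
    have [measurable]: "(\<lambda>w. aa e m w) \<in> borel_measurable (SS n)" by (rule aa_meas) (use mn in simp)
    have [measurable]: "(\<lambda>w. aa e (Suc m) w) \<in> borel_measurable (SS n)" by (rule aa_meas) (use mn in simp)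
    show "(\<lambda>w. ennreal (Phi (aa e m w))) \<in> borel_measurable (SS n)" by measurable
    show "(\<lambda>w. ennreal (Phi (aa e (Suc m) w))) \<in> borel_measurable (SS n)" by measurable
    show "\<And>w. w \<in> space (PiM ({..<n}-{m}) (\<lambda>_. CD)) \<Longrightarrow>
      (\<integral>\<^sup>+y. ennreal (Phi (aa e (Suc m) (w(m:=y)))) \<partial>CD) \<le> ennreal (1 - p*(1-q)/4) * (\<integral>\<^sup>+y. ennreal (Phi (aa e m (w(m:=y)))) \<partial>CD)"
      by (rule lueker_step[OF e mn])
  qed
  also have "\<dots> \<le> ennreal (1 - p*(1-q)/4) * (ennreal (1 - p*(1-q)/4) ^ m * ennreal (1/(2*e)))"
    using Suc.IH[OF less_imp_le[OF mn]] by (intro mult_left_mono) auto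
  finally show ?case by (simp add: mult_ac)
qed

lemma lueker_prob:
  assumes e: "0 < e" "e \<le> 1/2" and m: "m \<le> n"
  shows "emeasure (SS n) {w \<in> space (SS n). e \<le> Phi (aa e m w)} \<le> ennreal ((1 - p*(1-q)/4) ^ m / (2*e^2))"
proof -
  have meas: "(\<lambda>w. ennreal (Phi (aa e m w)) * indicator (space (SS n)) w) \<in> borel_measurable (SS n)"
    using m by measurable
  have "{w \<in> space (SS n). e \<le> Phi (aa e m w)} \<subseteq> {w \<in> space (SS n). 1 \<le> ennreal (1/e) * ennreal (Phi (aa e m w))}"
  proof safe
    fix w assume "e \<le> Phi (aa e m w)"
    then have "1 \<le> (1/e) * Phi (aa e m w)" using e by (simp add: field_simps)
    then show "1 \<le> ennreal (1/e) * ennreal (Phi (aa e m w))"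
      using e by (simp add: ennreal_mult[symmetric] ennreal_leI del: ennreal_1 flip: ennreal_1)
  qed
  then have "emeasure (SS n) {w \<in> space (SS n). e \<le> Phi (aa e m w)} \<le> emeasure (SS n) {w \<in> space (SS n). 1 \<le> ennreal (1/e) * ennreal (Phi (aa e m w))}"
    by (intro emeasure_mono) (use m in measurable)
  also have "\<dots> \<le> ennreal (1/e) * (\<integral>\<^sup>+w. ennreal (Phi (aa e m w)) * indicator (space (SS n)) w \<partial>SS n)"
    by (rule nn_integral_Markov_inequality[OF meas]) simp
  also have "(\<integral>\<^sup>+w. ennreal (Phi (aa e m w)) * indicator (space (SS n)) w \<partial>SS n) = (\<integral>\<^sup>+w. ennreal (Phi (aa e m w)) \<partial>SS n)"
    by (intro nn_integral_cong) auto
  also have "ennreal (1/e) * \<dots> \<le> ennreal (1/e) * (ennreal (1 - p*(1-q)/4) ^ m * ennreal (1/(2*e)))"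
    by (intro mult_left_mono lueker_int[OF e m]) auto
  also have "\<dots> = ennreal ((1 - p*(1-q)/4) ^ m / (2*e^2))"
  proof -
    have "p*(1-q) \<le> 1*1" using p0 p1 q0 q1 by (intro mult_mono) auto
    then have "0 \<le> 1 - p*(1-q)/4" by simp
    then have "ennreal (1/e) * (ennreal (1 - p*(1-q)/4) ^ m * ennreal (1/(2*e))) =
       ennreal (1/e * ((1 - p*(1-q)/4) ^ m * (1/(2*e))))"
    proof -
      let ?R = "1 - p*(1-q)/4"
      have h: "0 \<le> 1/e" "0 \<le> ?R^m" "0 \<le> 1/(2*e)" using e \<open>0 \<le> ?R\<close> by auto
      have "ennreal ?R ^ m = ennreal (?R^m)" using \<open>0 \<le> ?R\<close> by (simp add: ennreal_power)
      moreover have "ennreal (?R^m) * ennreal (1/(2*e)) = ennreal (?R^m * (1/(2*e)))"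
        by (rule ennreal_mult[symmetric]) (use h in auto)
      moreover have "ennreal (1/e) * ennreal (?R^m * (1/(2*e))) = ennreal (1/e * (?R^m * (1/(2*e))))"
        by (rule ennreal_mult[symmetric]) (use h in auto)
      ultimately show ?thesis by simp
    qed
    also have "1/e * ((1 - p*(1-q)/4) ^ m * (1/(2*e))) = (1 - p*(1-q)/4) ^ m / (2*e^2)"
      using e by (simp add: power2_eq_square field_simps)
    finally show ?thesis .
  qed
  finally show ?thesis .
qed

end

lemma cover_from_aa:
  assumes e: "0 < e" "e \<le> 1/2" and a: "1 - e < aa e m w" and z: "z \<in> WW"
  shows "\<exists>I\<subseteq>{..<m}. \<bar>z - (\<Sum>i\<in>I. Yv w i)\<bar> \<le> 2*e"
proof (rule ccontr)
  assume nc: "\<not> ?thesis"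
  define Q where "Q = (if z \<le> 0 then {z..z+e} else {z-e..z})"
  have QW: "Q \<subseteq> WW" using z e unfolding Q_def WW_def by auto
  have Qm: "measure lborel Q = e" unfolding Q_def using e by auto
  have Qd: "Q \<inter> Cov e m w = {}"
  proof (rule ccontr)
    assume "Q \<inter> Cov e m w \<noteq> {}"
    then obtain y I where y: "y \<in> Q" "I \<subseteq> {..<m}" "\<bar>y - (\<Sum>i\<in>I. Yv w i)\<bar> \<le> e" unfolding Cov_def by auto
    have "\<bar>z - y\<bar> \<le> e" using y(1) unfolding Q_def by (auto split: if_splits)
    then have "\<bar>z - (\<Sum>i\<in>I. Yv w i)\<bar> \<le> 2*e" using y(3) by linarith
    then show False using nc y(2) by auto
  qed
  have Qs: "Q \<in> sets borel" unfolding Q_def by auto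
  have Qf: "Q \<in> fmeasurable lborel" by (rule fm_WW[OF Qs QW])
  have "aa e m w + e = measure lborel (Cov e m w \<inter> WW) + measure lborel Q" unfolding aa_def Qm ..
  also have "\<dots> = measure lborel ((Cov e m w \<inter> WW) \<union> Q)"
    using Qd
    by (subst measure_Union) (auto intro!: fmeasurableD2 fm_WW Qf Qs)
  also have "\<dots> \<le> measure lborel WW"
    using QW Qs by (intro measure_mono_fmeasurable WW_fm) auto
  also have "\<dots> = 1" unfolding WW_def by simp
  finally show False using a by simp
qed

lemma Phi_small:
  assumes e: "0 < e" "e \<le> 1/2" and a: "0 < a" and P: "Phi a < e"
  shows "1 - e < a"
proof -
  have "1/a < 1 + e" using P unfolding Phi_def by simp
  then have "1 < a * (1 + e)" using a by (simp add: field_simps)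
  moreover have "(1 - e) * (1 + e) \<le> 1" by (simp add: algebra_simps)
  ultimately have "(1 - e) * (1 + e) < a * (1 + e)" by linarith
  then show ?thesis using e by (simp add: mult_less_cancel_right)
qed


lemma exp_quad:
  fixes u :: real assumes "\<bar>u\<bar> \<le> 1" shows "exp (-u) \<le> 1 - u + u^2"
proof (cases "u \<le> 0")
  case True
  have "exp (-u) \<le> 1 + (-u) + (-u)^2" using assms True by (intro exp_bound) auto
  then show ?thesis by simp
next
  case False
  have "1 + u \<le> exp u" by simp
  then have "exp (-u) \<le> 1 / (1 + u)" using False by (simp add: exp_minus field_simps)
  also have "\<dots> \<le> 1 - u + u^2"
  proof -
    have "1 \<le> (1 + u) * (1 - u + u^2)" using False by (simp add: algebra_simps power2_eq_square power3_eq_cube)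
    then show ?thesis using False by (simp add: field_simps)
  qed
  finally show ?thesis .
qed

lemma int_ind: "(\<integral>x. indicator {-1..1::real} x \<partial>lborel) = (2::real)"
  by simp

lemma int_x: "(\<integral>x. x * indicator {-1..1::real} x \<partial>lborel) = 0"
  using integral_power[of "-1" 1 1] by simp

lemma int_max:
  assumes "s = 1 \<or> s = (-1::real)"
  shows "(\<integral>x. max (s*x) 0 * indicator {-1..1::real} x \<partial>lborel) = 1/2"
  using assms
proof
  assume s: "s = 1"
  have "(\<lambda>x. max (s*x) 0 * indicator {-1..1::real} x) = (\<lambda>x. x ^ 1 * indicator {0..1} x)"
    using s by (auto simp: indicator_def fun_eq_iff)
  then show ?thesis using integral_power[of 0 1 1] by simp
next
  assume s: "s = -1"
  have "(\<lambda>x. max (s*x) 0 * indicator {-1..1::real} x) = (\<lambda>x. - (x ^ 1 * indicator {-1..0} x))"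
    using s by (auto simp: indicator_def fun_eq_iff)
  then show ?thesis using integral_power[of "-1" 0 1] by simp
qed

definition hh :: "real \<Rightarrow> bool \<Rightarrow> real \<times> bool \<times> bool \<Rightarrow> real" where
  "hh s al y = (if al \<and> fst (snd y) \<and> \<not> snd (snd y) then max (s * fst y) 0 else 0)
      + (if fst (snd y) \<and> snd (snd y) then s * fst y else 0)"

context pq begin

lemma hh_meas[measurable]: "hh s al \<in> borel_measurable CD"
proof (intro meas_CD_I)
  fix b1 b2
  show "(\<lambda>x. hh s al (x,b1,b2)) \<in> borel_measurable borel"
    by (cases "al \<and> b1 \<and> \<not> b2"; cases "b1 \<and> b2") (auto simp: hh_def)
qed

lemma chernoff_coord:
  assumes s: "s = 1 \<or> s = (-1::real)" and t: "0 < t" "t \<le> 1"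
  shows "(\<integral>\<^sup>+y. ennreal (exp (- t * hh s al y)) \<partial>CD) \<le> ennreal (exp (t^2 - t * (if al then p*(1-q)/4 else 0)))"
proof -
  define r where "r = (if al then p*(1-q) else 0)"
  define G where "G x = 1 + t^2 - t * (r * max (s*x) 0 + p*q*(s*x))" for x
  have abs_s: "\<bar>s\<bar> = 1" using s by auto
  have pqw: "0 \<le> p*q" "0 \<le> p*(1-q)" "0 \<le> (1-p)*q" "0 \<le> (1-p)*(1-q)" using p0 p1 q0 q1 by auto
  have r1: "0 \<le> r" "r \<le> 1" unfolding r_def using p0 p1 q0 q1 by (auto intro: mult_le_one)
  have i1: "integrable lborel (\<lambda>x. indicator {-1..1::real} x :: real)"
    by (intro integrable_real_indicator) auto
  have i2: "integrable lborel (\<lambda>x. max (s*x) 0 * indicator {-1..1::real} x)"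
    by (intro borel_integrable_atLeastAtMost) (auto intro!: continuous_intros)
  have i3: "integrable lborel (\<lambda>x. x * indicator {-1..1::real} x)"
    by (intro borel_integrable_atLeastAtMost) (auto intro!: continuous_intros)
  have iG: "integrable lborel (\<lambda>x. G x * indicator {-1..1::real} x)"
    unfolding G_def by (intro borel_integrable_atLeastAtMost) (auto intro!: continuous_intros)
  have fm: "(\<lambda>y. ennreal (exp (- t * hh s al y))) \<in> borel_measurable CD" by measurable
  have "(\<integral>\<^sup>+y. ennreal (exp (- t * hh s al y)) \<partial>CD) \<le> (\<integral>\<^sup>+x. ennreal (G x) * indicator {-1..1} x \<partial>lborel) / 2"
  proof (subst nn_coord[OF p0 p1 q0 q1 fm], intro divide_right_mono_ennreal nn_integral_mono)
    fix x :: real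
    show "(ennreal (p*q) * ennreal (exp (- t * hh s al (x,True,True))) + ennreal (p*(1-q)) * ennreal (exp (- t * hh s al (x,True,False)))
       + ennreal ((1-p)*q) * ennreal (exp (- t * hh s al (x,False,True))) + ennreal ((1-p)*(1-q)) * ennreal (exp (- t * hh s al (x,False,False))))
        * indicator {-1..1} x \<le> ennreal (G x) * indicator {-1..1} x"
    proof (cases "x \<in> {-1..1}")
      case False then show ?thesis by simp
    next
      case True
      have xb: "\<bar>x\<bar> \<le> 1" using True by auto
      have sx: "\<bar>s * x\<bar> \<le> 1" using xb abs_s by (simp add: abs_mult)
      have b1: "\<bar>t * hh s al (x,b1,b2)\<bar> \<le> 1" for b1 b2
      proof -
        have "\<bar>hh s al (x,b1,b2)\<bar> \<le> 1"
          using sx unfolding hh_def by auto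
        then have "\<bar>t\<bar> * \<bar>hh s al (x,b1,b2)\<bar> \<le> 1 * 1" using t by (intro mult_mono) auto
        then show ?thesis by (simp add: abs_mult)
      qed
      have b2: "(t * hh s al (x,b1,b2))^2 \<le> t^2" for b1 b2
      proof -
        have "\<bar>hh s al (x,b1,b2)\<bar> \<le> 1"
          using sx unfolding hh_def by auto
        then have "(hh s al (x,b1,b2))^2 \<le> 1" by (simp add: abs_square_le_1)
        then show ?thesis using t by (simp add: power_mult_distrib mult_left_le)
      qed
      have e: "exp (- t * hh s al (x,b1,b2)) \<le> 1 - t * hh s al (x,b1,b2) + t^2" for b1 b2
        using exp_quad[OF b1[of b1 b2]] b2[of b1 b2] by simp
      have "ennreal (p*q) * ennreal (exp (- t * hh s al (x,True,True))) + ennreal (p*(1-q)) * ennreal (exp (- t * hh s al (x,True,False)))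
       + ennreal ((1-p)*q) * ennreal (exp (- t * hh s al (x,False,True))) + ennreal ((1-p)*(1-q)) * ennreal (exp (- t * hh s al (x,False,False)))
        = ennreal (p*q * exp (- t * hh s al (x,True,True)) + p*(1-q) * exp (- t * hh s al (x,True,False))
       + (1-p)*q * exp (- t * hh s al (x,False,True)) + (1-p)*(1-q) * exp (- t * hh s al (x,False,False)))"
        using pqw by (simp add: ennreal_mult[symmetric] ennreal_plus[symmetric] del: ennreal_plus)
      also have "\<dots> \<le> ennreal (p*q * (1 - t * hh s al (x,True,True) + t^2) + p*(1-q) * (1 - t * hh s al (x,True,False) + t^2)
       + (1-p)*q * (1 - t * hh s al (x,False,True) + t^2) + (1-p)*(1-q) * (1 - t * hh s al (x,False,False) + t^2))"
        using pqw e by (intro ennreal_leI add_mono mult_left_mono) auto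
      also have "p*q * (1 - t * hh s al (x,True,True) + t^2) + p*(1-q) * (1 - t * hh s al (x,True,False) + t^2)
       + (1-p)*q * (1 - t * hh s al (x,False,True) + t^2) + (1-p)*(1-q) * (1 - t * hh s al (x,False,False) + t^2) = G x"
        unfolding G_def r_def hh_def by (simp add: algebra_simps)
      finally show ?thesis using True by simp
    qed
  qed
  also have "(\<integral>\<^sup>+x. ennreal (G x) * indicator {-1..1} x \<partial>lborel) = (\<integral>\<^sup>+x. ennreal (G x * indicator {-1..1} x) \<partial>lborel)"
    by (intro nn_integral_cong) (auto simp: indicator_def)
  also have "(\<integral>\<^sup>+x. ennreal (G x * indicator {-1..1} x) \<partial>lborel) = ennreal (\<integral>x. G x * indicator {-1..1} x \<partial>lborel)"
  proof (rule nn_integral_eq_integral[OF iG], rule AE_I2)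
    fix x :: real
    show "0 \<le> G x * indicator {-1..1} x"
    proof (cases "x \<in> {-1..1}")
      case True
      have sx: "\<bar>s * x\<bar> \<le> 1" using True abs_s by (auto simp: abs_mult)
      have "r * max (s*x) 0 + p*q*(s*x) \<le> r * 1 + p*q*1"
        using sx r1 pqw by (intro add_mono mult_left_mono) auto
      also have "\<dots> \<le> 1"
      proof -
        have "r + p*q \<le> p*(1-q) + p*q" unfolding r_def using pqw by auto
        also have "\<dots> = p" by (simp add: algebra_simps)
        finally show ?thesis using p1 by simp
      qed
      finally have B: "r * max (s*x) 0 + p*q*(s*x) \<le> 1" .
      have C: "t * (r * max (s*x) 0 + p*q*(s*x)) \<le> t * 1" using B t by (intro mult_left_mono) auto
      have D: "t \<le> 1 + t^2" using t by (smt (verit) zero_le_power2)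
      have "0 \<le> G x" using C D unfolding G_def by simp
      then show ?thesis using True by simp
    qed simp
  qed
  also have "(\<integral>x. G x * indicator {-1..1} x \<partial>lborel) =
     (\<integral>x. (1 + t^2) * indicator {-1..1::real} x - (t*r) * (max (s*x) 0 * indicator {-1..1::real} x)
           - (t*p*q * s) * (x * indicator {-1..1::real} x) \<partial>lborel)"
    by (intro Bochner_Integration.integral_cong) (auto simp: G_def indicator_def algebra_simps)
  also have "\<dots> = (1 + t^2) * 2 - (t*r) * (1/2) - (t*p*q * s) * 0"
    using i1 i2 i3 int_max[OF s] int_x
    by (simp add: Bochner_Integration.integral_diff)
  also have "ennreal ((1 + t^2) * 2 - (t*r) * (1/2) - (t*p*q * s) * 0) / 2 = ennreal (1 + (t^2 - t * (if al then p*(1-q)/4 else 0)))"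
  proof -
    have "t * r \<le> 1 * 1" using t r1 by (intro mult_mono) auto
    then have h1: "t * r \<le> 1" by simp
    have h2: "0 \<le> t^2" by simp
    have "(1 + t^2) * 2 - (t*r) * (1/2) - (t*p*q * s) * 0 = 2 + 2 * t^2 - (t*r)/2" by simp
    also have "\<dots> \<ge> 0" using h1 h2 by linarith
    finally have "0 \<le> (1 + t^2) * 2 - (t*r) * (1/2) - (t*p*q * s) * 0" .
    then have "ennreal ((1 + t^2) * 2 - (t*r) * (1/2) - (t*p*q * s) * 0) / 2 = ennreal (((1 + t^2) * 2 - (t*r) * (1/2) - (t*p*q * s) * 0) / 2)"
      by (subst divide_ennreal[symmetric]) auto
    also have "((1 + t^2) * 2 - (t*r) * (1/2) - (t*p*q * s) * 0) / 2 = 1 + (t^2 - t * (if al then p*(1-q)/4 else 0))"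
      unfolding r_def by (simp add: field_simps)
    finally show ?thesis .
  qed
  also have "\<dots> \<le> ennreal (exp (t^2 - t * (if al then p*(1-q)/4 else 0)))"
    by (intro ennreal_leI) simp
  finally show ?thesis .
qed

end


context pq begin

lemma sum_meas[measurable]:
  "(\<lambda>w. \<Sum>i<n. hh s (m \<le> i) (w i)) \<in> borel_measurable (SS n)"
proof (intro borel_measurable_sum)
  fix i assume "i \<in> {..<n}"
  then have "(\<lambda>w. w i) \<in> measurable (SS n) CD"
    unfolding sample_space_def by (intro measurable_component_singleton) auto
  then show "(\<lambda>w. hh s (m \<le> i) (w i)) \<in> borel_measurable (SS n)"
    by (rule measurable_compose) simp
qed

lemma sum_split:
  assumes "m \<le> n"
  shows "(\<Sum>i<n. t^2 - t * (if m \<le> i then R else 0)) = real n * t^2 - t * R * real (n - m)"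
proof -
  have "(\<Sum>i<n. t^2 - t * (if m \<le> i then R else 0)) = (\<Sum>i\<in>{0..<m}. t^2 - t * (if m \<le> i then R else 0)) + (\<Sum>i\<in>{m..<n}. t^2 - t * (if m \<le> i then R else 0))"
    unfolding lessThan_atLeast0 by (rule sum.atLeastLessThan_concat[symmetric]) (use assms in auto)
  also have "(\<Sum>i\<in>{0..<m}. t^2 - t * (if m \<le> i then R else 0)) = real m * t^2" by simp
  also have "(\<Sum>i\<in>{m..<n}. t^2 - t * (if m \<le> i then R else 0)) = real (n - m) * (t^2 - t * R)" by simp
  finally show ?thesis using assms by (simp add: algebra_simps of_nat_diff)
qed

lemma chernoff_sum:
  assumes s: "s = 1 \<or> s = (-1::real)" and t: "0 < t" "t \<le> 1" and m: "m \<le> n"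
  shows "emeasure (SS n) {w \<in> space (SS n). (\<Sum>i<n. hh s (m \<le> i) (w i)) \<le> 1}
     \<le> ennreal (exp (t + real n * t^2 - t * (p*(1-q)/4) * real (n - m)))"
proof -
  have I: "(\<integral>\<^sup>+w. ennreal (exp (- t * (\<Sum>i<n. hh s (m \<le> i) (w i)))) * indicator (space (SS n)) w \<partial>SS n)
      \<le> ennreal (exp (real n * t^2 - t * (p*(1-q)/4) * real (n - m)))"
  proof -
    have "(\<integral>\<^sup>+w. ennreal (exp (- t * (\<Sum>i<n. hh s (m \<le> i) (w i)))) * indicator (space (SS n)) w \<partial>SS n)
      = (\<integral>\<^sup>+w. (\<Prod>i\<in>{..<n}. ennreal (exp (- t * hh s (m \<le> i) (w i)))) \<partial>PiM {..<n} (\<lambda>_. CD))"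
      unfolding sample_space_def
      by (intro nn_integral_cong) (simp add: sum_distrib_left exp_sum prod_ennreal)
    also have "\<dots> = (\<Prod>i\<in>{..<n}. (\<integral>\<^sup>+y. ennreal (exp (- t * hh s (m \<le> i) y)) \<partial>CD))"
      by (rule P.product_nn_integral_prod) auto
    also have "\<dots> \<le> (\<Prod>i\<in>{..<n}. ennreal (exp (t^2 - t * (if m \<le> i then p*(1-q)/4 else 0))))"
      by (intro prod_mono_ennreal chernoff_coord[OF s t])
    also have "\<dots> = ennreal (exp (\<Sum>i<n. t^2 - t * (if m \<le> i then p*(1-q)/4 else 0)))"
      by (simp add: prod_ennreal exp_sum)
    also have "(\<Sum>i<n. t^2 - t * (if m \<le> i then p*(1-q)/4 else 0)) = real n * t^2 - t * (p*(1-q)/4) * real (n - m)"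
      by (rule sum_split[OF m])
    finally show ?thesis .
  qed
  have "emeasure (SS n) {w \<in> space (SS n). (\<Sum>i<n. hh s (m \<le> i) (w i)) \<le> 1}
     \<le> ennreal (exp (t * 1)) * (\<integral>\<^sup>+w. ennreal (exp (- t * (\<Sum>i<n. hh s (m \<le> i) (w i)))) * indicator (space (SS n)) w \<partial>SS n)"
    by (rule Chernoff_ineq_nn_integral_le[OF t(1)]) auto
  also have "\<dots> \<le> ennreal (exp (t * 1)) * ennreal (exp (real n * t^2 - t * (p*(1-q)/4) * real (n - m)))"
    by (intro mult_left_mono I) auto
  also have "\<dots> = ennreal (exp (t + real n * t^2 - t * (p*(1-q)/4) * real (n - m)))"
    by (simp add: ennreal_mult[symmetric] exp_add[symmetric] algebra_simps)
  finally show ?thesis .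
qed

end


lemma greedy:
  fixes v :: "'a \<Rightarrow> real" and t :: real
  assumes "finite J" "\<forall>j\<in>J. 0 \<le> v j \<and> v j \<le> 1" "0 \<le> t" "t \<le> (\<Sum>j\<in>J. v j)"
  shows "\<exists>K\<subseteq>J. \<bar>t - (\<Sum>j\<in>K. v j)\<bar> \<le> 1/2"
  using assms
proof (induction J arbitrary: t rule: finite_induct)
  case empty
  then show ?case by auto
next
  case (insert j J)
  let ?S = "\<Sum>i\<in>J. v i"
  show ?case
  proof (cases "t \<le> ?S")
    case True
    have "\<forall>j\<in>J. 0 \<le> v j \<and> v j \<le> 1" using insert.prems by auto
    then have "\<exists>K\<subseteq>J. \<bar>t - (\<Sum>j\<in>K. v j)\<bar> \<le> 1/2"
      using insert.IH insert.prems True by blast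
    then obtain K where "K \<subseteq> J" "\<bar>t - (\<Sum>j\<in>K. v j)\<bar> \<le> 1/2" by blast
    then show ?thesis by (intro exI[of _ K]) auto
  next
    case False
    have vj: "0 \<le> v j" "v j \<le> 1" using insert by auto
    have tl: "t \<le> ?S + v j" using insert by simp
    show ?thesis
    proof (cases "t - ?S \<le> 1/2")
      case True
      then show ?thesis using False by (intro exI[of _ J]) auto
    next
      case False2: False
      have "(\<Sum>i\<in>insert j J. v i) = v j + ?S" using insert by simp
      then have "\<bar>t - (\<Sum>i\<in>insert j J. v i)\<bar> \<le> 1/2" using False2 tl vj by auto
      then show ?thesis by (intro exI[of _ "insert j J"]) auto
    qed
  qed
qed

definition Lk :: "nat \<Rightarrow> (nat \<Rightarrow> real \<times> bool \<times> bool) \<Rightarrow> real" where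
  "Lk n w = (\<Sum>i<n. Mv w i * M'v w i * Xv w i)"

lemma sum_hh_pos:
  "(\<Sum>i<n. hh 1 (m \<le> i) (w i)) = (\<Sum>i\<in>{i\<in>{..<n}. m \<le> i \<and> fst (snd (w i)) \<and> \<not> snd (snd (w i)) \<and> 0 \<le> fst (w i)}. Yv w i) + Lk n w"
proof -
  have "(\<Sum>i<n. hh 1 (m \<le> i) (w i)) = (\<Sum>i<n. (if m \<le> i \<and> fst (snd (w i)) \<and> \<not> snd (snd (w i)) \<and> 0 \<le> fst (w i) then Yv w i else 0)) + (\<Sum>i<n. Mv w i * M'v w i * Xv w i)"
    unfolding sum.distrib[symmetric] by (rule sum.cong) (auto simp: hh_def Yv_def Mv_def M'v_def Xv_def)
  also have "(\<Sum>i<n. (if m \<le> i \<and> fst (snd (w i)) \<and> \<not> snd (snd (w i)) \<and> 0 \<le> fst (w i) then Yv w i else 0))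
     = (\<Sum>i\<in>{i\<in>{..<n}. m \<le> i \<and> fst (snd (w i)) \<and> \<not> snd (snd (w i)) \<and> 0 \<le> fst (w i)}. Yv w i)"
    by (rule sum.inter_filter[symmetric]) simp
  finally show ?thesis unfolding Lk_def .
qed

lemma sum_hh_neg:
  "(\<Sum>i<n. hh (-1) (m \<le> i) (w i)) = (\<Sum>i\<in>{i\<in>{..<n}. m \<le> i \<and> fst (snd (w i)) \<and> \<not> snd (snd (w i)) \<and> fst (w i) < 0}. - Yv w i) - Lk n w"
proof -
  have "(\<Sum>i<n. hh (-1) (m \<le> i) (w i)) = (\<Sum>i<n. (if m \<le> i \<and> fst (snd (w i)) \<and> \<not> snd (snd (w i)) \<and> fst (w i) < 0 then - Yv w i else 0)) - (\<Sum>i<n. Mv w i * M'v w i * Xv w i)"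
    unfolding sum_subtractf[symmetric] by (rule sum.cong) (auto simp: hh_def Yv_def Mv_def M'v_def Xv_def)
  also have "(\<Sum>i<n. (if m \<le> i \<and> fst (snd (w i)) \<and> \<not> snd (snd (w i)) \<and> fst (w i) < 0 then - Yv w i else 0))
     = (\<Sum>i\<in>{i\<in>{..<n}. m \<le> i \<and> fst (snd (w i)) \<and> \<not> snd (snd (w i)) \<and> fst (w i) < 0}. - Yv w i)"
    by (rule sum.inter_filter[symmetric]) simp
  finally show ?thesis unfolding Lk_def .
qed


lemma combine:
  assumes mn: "m \<le> n"
    and bnd: "\<forall>i<n. \<bar>fst (w i)\<bar> \<le> 1"
    and H1: "1 \<le> (\<Sum>i<n. hh 1 (m \<le> i) (w i))"
    and H2: "1 \<le> (\<Sum>i<n. hh (-1) (m \<le> i) (w i))"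
    and H3: "\<forall>z\<in>WW. \<exists>I\<subseteq>{..<m}. \<bar>z - (\<Sum>i\<in>I. Yv w i)\<bar> \<le> e"
    and z: "z \<in> {-1..1}"
  shows "\<exists>I\<subseteq>{..<n}. \<bar>z - Lk n w - (\<Sum>i\<in>I. Yv w i)\<bar> \<le> e"
proof -
  define t where "t = z - Lk n w"
  define JP where "JP = {i\<in>{..<n}. m \<le> i \<and> fst (snd (w i)) \<and> \<not> snd (snd (w i)) \<and> 0 \<le> fst (w i)}"
  define JN where "JN = {i\<in>{..<n}. m \<le> i \<and> fst (snd (w i)) \<and> \<not> snd (snd (w i)) \<and> fst (w i) < 0}"
  have YJP: "i \<in> JP \<Longrightarrow> Yv w i = fst (w i)" for i unfolding JP_def by (simp add: Yv_def Mv_def M'v_def Xv_def)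
  have YJN: "i \<in> JN \<Longrightarrow> Yv w i = fst (w i)" for i unfolding JN_def by (simp add: Yv_def Mv_def M'v_def Xv_def)
  have "\<exists>K. K \<subseteq> {m..<n} \<and> \<bar>t - (\<Sum>i\<in>K. Yv w i)\<bar> \<le> 1/2"
  proof (cases "0 \<le> t")
    case True
    have "t \<le> (\<Sum>i\<in>JP. Yv w i)" using H1 z unfolding sum_hh_pos t_def JP_def by auto
    moreover have "\<forall>j\<in>JP. 0 \<le> Yv w j \<and> Yv w j \<le> 1" using bnd YJP unfolding JP_def by fastforce
    ultimately obtain K where K: "K \<subseteq> JP" "\<bar>t - (\<Sum>i\<in>K. Yv w i)\<bar> \<le> 1/2"
      using greedy[of JP "Yv w" t] True unfolding JP_def by auto
    moreover have "JP \<subseteq> {m..<n}" unfolding JP_def by auto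
    ultimately show ?thesis by blast
  next
    case False
    have "-t \<le> (\<Sum>i\<in>JN. - Yv w i)" using H2 z unfolding sum_hh_neg t_def JN_def by auto
    moreover have "\<forall>j\<in>JN. 0 \<le> - Yv w j \<and> - Yv w j \<le> 1" using bnd YJN unfolding JN_def by fastforce
    ultimately obtain K where K: "K \<subseteq> JN" "\<bar>-t - (\<Sum>i\<in>K. - Yv w i)\<bar> \<le> 1/2"
      using greedy[of JN "\<lambda>i. - Yv w i" "-t"] False unfolding JN_def by auto
    then have "\<bar>t - (\<Sum>i\<in>K. Yv w i)\<bar> \<le> 1/2" by (simp add: sum_negf abs_minus_commute)
    moreover have "JN \<subseteq> {m..<n}" unfolding JN_def by auto
    ultimately show ?thesis using K(1) by blast
  qed
  then obtain K where K: "K \<subseteq> {m..<n}" "\<bar>t - (\<Sum>i\<in>K. Yv w i)\<bar> \<le> 1/2" by blast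
  have "t - (\<Sum>i\<in>K. Yv w i) \<in> WW" using K(2) unfolding WW_def atLeastAtMost_iff by linarith
  then obtain I where I: "I \<subseteq> {..<m}" "\<bar>t - (\<Sum>i\<in>K. Yv w i) - (\<Sum>i\<in>I. Yv w i)\<bar> \<le> e" using H3 by blast
  have fin: "finite K" "finite I" using K(1) I(1) by (auto intro: finite_subset)
  have dis: "K \<inter> I = {}" using K(1) I(1) by fastforce
  have "(\<Sum>i\<in>K \<union> I. Yv w i) = (\<Sum>i\<in>K. Yv w i) + (\<Sum>i\<in>I. Yv w i)"
    by (rule sum.union_disjoint[OF fin dis])
  moreover have "K \<union> I \<subseteq> {..<n}" using K(1) I(1) mn by auto
  ultimately show ?thesis using I(2) unfolding t_def
    by (intro exI[of _ "K \<union> I"]) (auto simp: algebra_simps)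
qed


lemma rat_approx:
  assumes z: "z \<in> {-1..1::real}" shows "z \<in> closure (\<rat> \<inter> {-1..1})"
proof (subst closure_approachable, intro allI impI)
  fix e :: real assume e: "0 < e"
  define a where "a = (if z < 1 then z else max (z-e) (-1))"
  define b where "b = (if z < 1 then min (z+e) 1 else z)"
  have "a < b" using z e unfolding a_def b_def by auto
  then obtain r where r: "r \<in> \<rat>" "a < r" "r < b" using Rats_dense_in_real by blast
  have "r \<in> {-1..1}" "dist r z < e" using r z e unfolding a_def b_def dist_real_def by (auto split: if_splits)
  then show "\<exists>y\<in>\<rat> \<inter> {-1..1}. dist y z < e" using r(1) by blast
qed

lemma good_rat:
  fixes c :: "nat set \<Rightarrow> real"
  assumes "\<forall>z\<in>\<rat> \<inter> {-1..1}. \<exists>I\<in>Pow {..<n}. \<bar>z - c I\<bar> \<le> e"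
  shows "\<forall>z\<in>{-1..1}. \<exists>I\<in>Pow {..<n}. \<bar>z - c I\<bar> \<le> e"
proof -
  let ?K = "{z. \<exists>I\<in>Pow {..<n}. \<bar>z - c I\<bar> \<le> e}"
  have "?K = (\<Union>I\<in>Pow {..<n}. {z. \<bar>z - c I\<bar> \<le> e})" by auto
  moreover have "closed (\<Union>I\<in>Pow {..<n}. {z. \<bar>z - c I\<bar> \<le> e})"
    by (intro closed_UN) (auto intro!: closed_Collect_le continuous_intros)
  ultimately have cK: "closed ?K" by simp
  have "closure (\<rat> \<inter> {-1..1}) \<subseteq> ?K" using assms by (intro closure_minimal cK) auto
  then show ?thesis using rat_approx by blast
qed

context pq begin

lemma good_sets:
  "{w \<in> space (SS n). \<forall>z \<in> {-1..1::real}. \<exists>I \<subseteq> {..<n}.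
      \<bar>z - (\<Sum>i<n. Mv w i * M'v w i * Xv w i) - (\<Sum>i\<in>I. Mv w i * (1 - M'v w i) * Xv w i)\<bar> \<le> e}
   \<in> sets (SS n)"
proof -
  let ?c = "\<lambda>w I. Lk n w + (\<Sum>i\<in>I. Yv w i)"
  let ?A = "\<lambda>z. {w \<in> space (SS n). \<exists>I\<in>Pow {..<n}. \<bar>z - ?c w I\<bar> \<le> e}"
  have eq: "{w \<in> space (SS n). \<forall>z \<in> {-1..1::real}. \<exists>I \<subseteq> {..<n}.
      \<bar>z - (\<Sum>i<n. Mv w i * M'v w i * Xv w i) - (\<Sum>i\<in>I. Mv w i * (1 - M'v w i) * Xv w i)\<bar> \<le> e}
     = (\<Inter>z\<in>\<rat> \<inter> {-1..1}. ?A z)"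
  proof (intro equalityI subsetI)
    fix w assume "w \<in> {w \<in> space (SS n). \<forall>z \<in> {-1..1::real}. \<exists>I \<subseteq> {..<n}.
      \<bar>z - (\<Sum>i<n. Mv w i * M'v w i * Xv w i) - (\<Sum>i\<in>I. Mv w i * (1 - M'v w i) * Xv w i)\<bar> \<le> e}"
    then show "w \<in> (\<Inter>z\<in>\<rat> \<inter> {-1..1}. ?A z)"
      by (auto simp: Lk_def Yv_def algebra_simps)
  next
    fix w assume w: "w \<in> (\<Inter>z\<in>\<rat> \<inter> {-1..1}. ?A z)"
    have "0 \<in> \<rat> \<inter> {-1..1::real}" by auto
    then have ws: "w \<in> space (SS n)" using w by auto
    have "\<forall>z\<in>\<rat> \<inter> {-1..1}. \<exists>I\<in>Pow {..<n}. \<bar>z - ?c w I\<bar> \<le> e" using w by auto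
    from good_rat[OF this] show "w \<in> {w \<in> space (SS n). \<forall>z \<in> {-1..1::real}. \<exists>I \<subseteq> {..<n}.
      \<bar>z - (\<Sum>i<n. Mv w i * M'v w i * Xv w i) - (\<Sum>i\<in>I. Mv w i * (1 - M'v w i) * Xv w i)\<bar> \<le> e}"
      using ws by (auto simp: Lk_def Yv_def algebra_simps)
  qed
  have "(\<Inter>z\<in>\<rat> \<inter> {-1..1}. ?A z) \<in> sets (SS n)"
  proof (rule sets.countable_INT')
    show "countable (\<rat> \<inter> {-1..1::real})" by (intro countable_Int1 countable_rat)
    show "\<rat> \<inter> {-1..1::real} \<noteq> {}" using Rats_0 by auto
    show "?A ` (\<rat> \<inter> {-1..1}) \<subseteq> sets (SS n)"
    proof safe
      fix z :: real
      have "?A z = (\<Union>I\<in>Pow {..<n}. {w \<in> space (SS n). \<bar>z - ?c w I\<bar> \<le> e})" by auto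
      also have "\<dots> \<in> sets (SS n)"
      proof (intro sets.finite_UN)
        fix I assume "I \<in> Pow {..<n}"
        then have I: "i \<in> I \<Longrightarrow> i < n" for i by auto
        have [measurable]: "(\<lambda>w. \<Sum>i\<in>I. Yv w i) \<in> borel_measurable (SS n)"
          by (intro borel_measurable_sum Yv_meas I)
        have [measurable]: "(\<lambda>w. Lk n w) \<in> borel_measurable (SS n)"
        proof -
          have "(\<lambda>w. Lk n w) = (\<lambda>w. \<Sum>i<n. hh 1 False (w i))"
            by (auto simp: Lk_def hh_def Mv_def M'v_def Xv_def fun_eq_iff intro!: sum.cong)
          also have "\<dots> \<in> borel_measurable (SS n)" using sum_meas[of 1 "Suc n" n] by simp
          finally show ?thesis .
        qed
        show "{w \<in> space (SS n). \<bar>z - ?c w I\<bar> \<le> e} \<in> sets (SS n)" by measurable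
      qed auto
      finally show "?A z \<in> sets (SS n)" .
    qed
  qed
  then show ?thesis unfolding eq .
qed

end


context pq begin

lemma ae_CD: "AE y in CD. \<bar>fst y\<bar> \<le> 1"
proof (rule AE_I')
  let ?U = "uniform_measure lborel {-1..1::real}"
  let ?B = "measure_pmf (bernoulli_pmf p) \<Otimes>\<^sub>M measure_pmf (bernoulli_pmf q)"
  let ?N = "{x::real. 1 < \<bar>x\<bar>} \<times> (UNIV :: (bool \<times> bool) set)"
  have PB: "prob_space ?B" by (intro prob_space_pair prob_space_measure_pmf)
  have Ns: "{x::real. 1 < \<bar>x\<bar>} \<in> sets ?U" by simp
  have "emeasure CD ?N = emeasure ?U {x::real. 1 < \<bar>x\<bar>} * emeasure ?B UNIV"
    unfolding coord_distr_def
    by (rule sigma_finite_measure.emeasure_pair_measure_Times[OF prob_space_imp_sigma_finite[OF PB] Ns])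
       (simp add: sets_BB)
  also have "emeasure ?U {x::real. 1 < \<bar>x\<bar>} = 0"
  proof -
    have "{-1..1} \<inter> {x::real. 1 < \<bar>x\<bar>} = {}" by auto
    then show ?thesis by (subst emeasure_uniform_measure) auto
  qed
  finally have "emeasure CD ?N = 0" by simp
  moreover have "?N \<in> sets CD" unfolding coord_distr_def by (simp add: sets_BB)
  ultimately show "?N \<in> null_sets CD" by auto
  show "{y \<in> space CD. \<not> \<bar>fst y\<bar> \<le> 1} \<subseteq> ?N" by auto
qed

lemma ae_bnd: "AE w in SS n. \<forall>i<n. \<bar>fst (w i)\<bar> \<le> 1"
proof -
  have "\<forall>i\<in>{..<n}. AE w in SS n. \<bar>fst (w i)\<bar> \<le> 1"
    unfolding sample_space_def
  proof
    fix i assume i: "i \<in> {..<n}"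
    show "AE w in PiM {..<n} (\<lambda>_. CD). \<bar>fst (w i)\<bar> \<le> 1"
      by (rule AE_PiM_component[where P="\<lambda>y. \<bar>fst y\<bar> \<le> 1" and M="\<lambda>_. CD", OF prob_CD i ae_CD])
  qed
  then have "AE w in SS n. \<forall>i\<in>{..<n}. \<bar>fst (w i)\<bar> \<le> 1"
    by (intro eventually_ball_finite) auto
  then show ?thesis by (rule eventually_mono) auto
qed

end

lemma arith_final:
  fixes r e d :: real and n :: nat
  assumes r: "0 < r" "r \<le> 1" and e: "0 < e" "e < 1" and d: "0 < d" "d < 1"
    and n: "2 * ln (11/(e*d)) \<le> real n * r^2/256"
  shows "2 * exp (r/16 + real n * (r/16)^2 - (r/16) * (r/4) * real (n - n div 2))
     + (1 - r/4) ^ (n div 2) / (2*(e/2)^2) \<le> d"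
proof -
  define X where "X = exp (- (real n * r^2/256))"
  have X0: "0 < X" unfolding X_def by simp
  have "ln ((11/(e*d))^2) \<le> real n * r^2/256" using n e d by (simp add: ln_realpow)
  then have "(11/(e*d))^2 \<le> exp (real n * r^2/256)"
    using e d by (subst ln_le_cancel_iff[symmetric]) auto
  then have "X \<le> 1 / (11/(e*d))^2" unfolding X_def using e d
    by (simp add: exp_minus field_simps)
  then have Xb: "X \<le> (e*d)^2/121" by (simp add: power_divide)
  have nm: "real n / 2 \<le> real (n - n div 2)" by linarith
  have nm2: "real n / 2 - 1/2 \<le> real (n div 2)" by linarith
  have t1: "r/16 + real n * (r/16)^2 - (r/16) * (r/4) * real (n - n div 2) \<le> 1 + (- (real n * r^2/256))"
  proof -
    have "(r/16) * (r/4) * (real n / 2) \<le> (r/16) * (r/4) * real (n - n div 2)"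
      using r nm by (intro mult_left_mono) auto
    moreover have "(r/16) * (r/4) * (real n / 2) = real n * r^2/128" by (simp add: power2_eq_square)
    moreover have "real n * (r/16)^2 = real n * r^2/256" by (simp add: power2_eq_square)
    moreover have "r/16 \<le> 1" using r by simp
    ultimately show ?thesis by linarith
  qed
  have "exp (r/16 + real n * (r/16)^2 - (r/16) * (r/4) * real (n - n div 2)) \<le> exp (1 + (- (real n * r^2/256)))"
    using t1 by simp
  also have "\<dots> = exp 1 * X" unfolding X_def by (simp only: exp_add)
  also have "\<dots> \<le> 3 * X" using X0 exp_le by (intro mult_right_mono) auto
  finally have T1: "exp (r/16 + real n * (r/16)^2 - (r/16) * (r/4) * real (n - n div 2)) \<le> 3 * X" .
  have "(1 - r/4) ^ (n div 2) \<le> exp (- (r/4)) ^ (n div 2)"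
    using r by (intro power_mono) (auto simp: exp_ge_add_one_self[of "-(r/4)", simplified])
  also have "\<dots> = exp (- (r/4) * real (n div 2))" by (simp add: exp_of_nat_mult[symmetric] mult.commute)
  also have "\<dots> \<le> exp (1 + (- (real n * r^2/256)))"
  proof -
    have "- (r/4) * real (n div 2) \<le> - (r/4) * (real n / 2 - 1/2)" using r nm2 by (intro mult_left_mono_neg) auto
    also have "\<dots> \<le> 1 + (- (real n * r^2/256))"
    proof -
      have "real n * r^2 \<le> real n * (32 * r)" using r by (intro mult_left_mono) (auto simp: power2_eq_square)
      then show ?thesis using r by (simp add: field_simps)
    qed
    finally show ?thesis by simp
  qed
  also have "\<dots> = exp 1 * X" unfolding X_def by (simp only: exp_add)
  also have "\<dots> \<le> 3 * X" using X0 exp_le by (intro mult_right_mono) auto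
  finally have T2: "(1 - r/4) ^ (n div 2) \<le> 3 * X" .
  have "2 * exp (r/16 + real n * (r/16)^2 - (r/16) * (r/4) * real (n - n div 2))
     + (1 - r/4) ^ (n div 2) / (2*(e/2)^2) \<le> 2 * (3 * X) + (3 * X) / (2*(e/2)^2)"
    using T1 T2 e by (intro add_mono divide_right_mono mult_left_mono) auto
  also have "\<dots> = 6 * X + 6 * X / e^2" using e by (simp add: field_simps power2_eq_square)
  also have "\<dots> \<le> 6 * X / e^2 + 6 * X / e^2"
  proof -
    have "X \<le> X / e^2" using X0 e by (simp add: field_simps power_le_one)
    then show ?thesis by simp
  qed
  also have "\<dots> = 12 * X / e^2" by simp
  also have "\<dots> \<le> 12 * ((e*d)^2/121) / e^2" using Xb e by (intro divide_right_mono mult_left_mono) auto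
  also have "\<dots> = 12 * d^2 / 121" using e by (simp add: power_mult_distrib field_simps)
  also have "\<dots> \<le> d" using d by (simp add: power2_eq_square field_simps) 
  finally show ?thesis .
qed


context pq begin

lemma main_bound:
  assumes e: "0 < e" "e < 1" and d: "0 < d" "d < 1"
    and n: "2 * ln (11/(e*d)) \<le> real n * (p*(1-q))^2/256"
  shows "1 - d \<le> measure (SS n)
         {w \<in> space (SS n).
            \<forall>z \<in> {-1..1::real}. \<exists>I \<subseteq> {..<n}.
              \<bar>z - (\<Sum>i<n. Mv w i * M'v w i * Xv w i)
                 - (\<Sum>i\<in>I. Mv w i * (1 - M'v w i) * Xv w i)\<bar> \<le> e}"
    (is "_ \<le> measure _ ?G")
proof -
  interpret PS: prob_space "SS n" by (rule prob_SS)
  define r where "r = p*(1-q)"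
  define m where "m = n div 2"
  define h where "h = e/2"
  have r: "0 < r" "r \<le> 1" unfolding r_def using p0 p1 q0 q1 by (auto intro: mult_le_one)
  have h: "0 < h" "h \<le> 1/2" unfolding h_def using e by auto
  have mn: "m \<le> n" unfolding m_def by simp
  have Gs: "?G \<in> sets (SS n)" by (rule good_sets)
  define B1 where "B1 = {w \<in> space (SS n). (\<Sum>i<n. hh 1 (m \<le> i) (w i)) \<le> 1}"
  define B2 where "B2 = {w \<in> space (SS n). (\<Sum>i<n. hh (-1) (m \<le> i) (w i)) \<le> 1}"
  define B3 where "B3 = {w \<in> space (SS n). h \<le> Phi (aa h m w)}"
  have [measurable]: "(\<lambda>w. aa h m w) \<in> borel_measurable (SS n)" by (rule aa_meas[OF mn])
  have B1s: "B1 \<in> sets (SS n)" unfolding B1_def by measurable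
  have B2s: "B2 \<in> sets (SS n)" unfolding B2_def by measurable
  have B3s: "B3 \<in> sets (SS n)" unfolding B3_def by measurable
  obtain N0 where N0': "{w \<in> space (SS n). \<not> (\<forall>i<n. \<bar>fst (w i)\<bar> \<le> 1)} \<subseteq> N0"
      "emeasure (SS n) N0 = 0" "N0 \<in> sets (SS n)"
    using ae_bnd[of n] by (rule AE_E)
  have N0s: "N0 \<in> sets (SS n)" using N0' by auto
  have N0: "N0 \<in> null_sets (SS n)" "{w \<in> space (SS n). \<not> (\<forall>i<n. \<bar>fst (w i)\<bar> \<le> 1)} \<subseteq> N0"
    using N0' by auto
  have sub: "space (SS n) - ?G \<subseteq> B1 \<union> B2 \<union> B3 \<union> N0"
  proof
    fix w assume w: "w \<in> space (SS n) - ?G"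
    show "w \<in> B1 \<union> B2 \<union> B3 \<union> N0"
    proof (rule ccontr)
      assume "w \<notin> B1 \<union> B2 \<union> B3 \<union> N0"
      then have nb: "w \<notin> B1" "w \<notin> B2" "w \<notin> B3" "w \<notin> N0" by auto
      have ws: "w \<in> space (SS n)" using w by auto
      have bnd: "\<forall>i<n. \<bar>fst (w i)\<bar> \<le> 1" using N0(2) nb(4) ws by blast
      have H1: "1 \<le> (\<Sum>i<n. hh 1 (m \<le> i) (w i))" using nb(1) ws unfolding B1_def by auto
      have H2: "1 \<le> (\<Sum>i<n. hh (-1) (m \<le> i) (w i))" using nb(2) ws unfolding B2_def by auto
      have "Phi (aa h m w) < h" using nb(3) ws unfolding B3_def by auto
      moreover have "0 < aa h m w" using aa_bounds[OF h, of m w] h by linarith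
      ultimately have "1 - h < aa h m w" by (intro Phi_small[OF h])
      then have H3: "\<forall>z\<in>WW. \<exists>I\<subseteq>{..<m}. \<bar>z - (\<Sum>i\<in>I. Yv w i)\<bar> \<le> e"
        using cover_from_aa[OF h] unfolding h_def by auto
      have "\<forall>z\<in>{-1..1}. \<exists>I\<subseteq>{..<n}. \<bar>z - Lk n w - (\<Sum>i\<in>I. Yv w i)\<bar> \<le> e"
        using combine[OF mn bnd H1 H2 H3] by blast
      then have "w \<in> ?G" using ws unfolding Lk_def Yv_def by auto
      then show False using w by auto
    qed
  qed
  have b0: "PS.prob N0 = 0" using N0 by (simp add: PS.emeasure_eq_measure null_sets_def)
  have b1: "PS.prob B1 \<le> exp (r/16 + real n * (r/16)^2 - (r/16) * (r/4) * real (n - n div 2))"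
  proof -
    have "emeasure (SS n) B1 \<le> ennreal (exp (r/16 + real n * (r/16)^2 - (r/16) * (p*(1-q)/4) * real (n - m)))"
      unfolding B1_def by (rule chernoff_sum) (use r mn in auto)
    then show ?thesis unfolding r_def m_def by (simp add: PS.emeasure_eq_measure)
  qed
  have b2: "PS.prob B2 \<le> exp (r/16 + real n * (r/16)^2 - (r/16) * (r/4) * real (n - n div 2))"
  proof -
    have "emeasure (SS n) B2 \<le> ennreal (exp (r/16 + real n * (r/16)^2 - (r/16) * (p*(1-q)/4) * real (n - m)))"
      unfolding B2_def by (rule chernoff_sum) (use r mn in auto)
    then show ?thesis unfolding r_def m_def by (simp add: PS.emeasure_eq_measure)
  qed
  have b3: "PS.prob B3 \<le> (1 - r/4) ^ (n div 2) / (2*(e/2)^2)"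
  proof -
    have "emeasure (SS n) B3 \<le> ennreal ((1 - p*(1-q)/4) ^ m / (2*h^2))"
      unfolding B3_def by (rule lueker_prob[OF h mn])
    moreover have "0 \<le> (1 - p*(1-q)/4) ^ m / (2*h^2)" using r unfolding r_def by auto
    ultimately show ?thesis unfolding r_def m_def h_def by (simp add: PS.emeasure_eq_measure)
  qed
  have "PS.prob (space (SS n) - ?G) \<le> PS.prob (B1 \<union> B2 \<union> B3 \<union> N0)"
    using sub B1s B2s B3s N0s by (intro PS.finite_measure_mono) auto
  also have "\<dots> \<le> PS.prob (B1 \<union> B2 \<union> B3) + PS.prob N0"
    using B1s B2s B3s N0s by (intro measure_Un_le) auto
  also have "\<dots> \<le> PS.prob (B1 \<union> B2) + PS.prob B3 + PS.prob N0"
    using B1s B2s B3s by (intro add_right_mono measure_Un_le) auto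
  also have "\<dots> \<le> PS.prob B1 + PS.prob B2 + PS.prob B3 + PS.prob N0"
    using B1s B2s by (intro add_right_mono measure_Un_le) auto
  finally have tot: "PS.prob (space (SS n) - ?G) \<le> PS.prob B1 + PS.prob B2 + PS.prob B3 + PS.prob N0" .
  then have "PS.prob (space (SS n) - ?G) \<le> d"
  proof -
    have n': "2 * ln (11/(e*d)) \<le> real n * r^2/256" using n unfolding r_def .
    show ?thesis using arith_final[OF r e d n'] b0 b1 b2 b3 tot by linarith
  qed
  moreover have "PS.prob (space (SS n) - ?G) = 1 - PS.prob ?G" by (rule PS.prob_compl[OF Gs])
  ultimately show ?thesis by simp
qed

end

theorem mainTheorem2:
  shows "\<exists>C'>0. \<forall>p q :: real. 0 < p \<and> p < 1 \<and> 0 < q \<and> q < 1 \<longrightarrow>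
    (\<exists>C>0. \<forall>(\<epsilon>::real) (\<delta>::real) (n::nat).
       0 < \<epsilon> \<and> \<epsilon> < 1 \<and> 0 < \<delta> \<and> \<delta> < 1 \<and> 0 < n \<and>
       real n \<ge> C * ln (C' / (\<epsilon> * \<delta>)) \<longrightarrow>
       measure (sample_space p q n)
         {\<omega> \<in> space (sample_space p q n).
            \<forall>z \<in> {-1..1::real}. \<exists>I \<subseteq> {..<n}.
              \<bar>z - (\<Sum>i<n. Mv \<omega> i * M'v \<omega> i * Xv \<omega> i)
                 - (\<Sum>i\<in>I. Mv \<omega> i * (1 - M'v \<omega> i) * Xv \<omega> i)\<bar> \<le> \<epsilon>}
         \<ge> 1 - \<delta>)"
proof (rule exI[of _ "11::real"], intro conjI allI impI)
  show "(0::real) < 11" by simp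
  fix p q :: real
  assume pq0: "0 < p \<and> p < 1 \<and> 0 < q \<and> q < 1"
  interpret pq p q by unfold_locales (use pq0 in auto)
  define r where "r = p*(1-q)"
  have r0: "0 < r" unfolding r_def using pq0 by auto
  show "\<exists>C>0. \<forall>(\<epsilon>::real) (\<delta>::real) (n::nat).
       0 < \<epsilon> \<and> \<epsilon> < 1 \<and> 0 < \<delta> \<and> \<delta> < 1 \<and> 0 < n \<and>
       real n \<ge> C * ln (11 / (\<epsilon> * \<delta>)) \<longrightarrow>
       measure (sample_space p q n)
         {\<omega> \<in> space (sample_space p q n).
            \<forall>z \<in> {-1..1::real}. \<exists>I \<subseteq> {..<n}.
              \<bar>z - (\<Sum>i<n. Mv \<omega> i * M'v \<omega> i * Xv \<omega> i)
                 - (\<Sum>i\<in>I. Mv \<omega> i * (1 - M'v \<omega> i) * Xv \<omega> i)\<bar> \<le> \<epsilon>}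
         \<ge> 1 - \<delta>"
  proof (intro exI[of _ "512/r^2"] conjI allI impI)
    show "0 < 512/r^2" using r0 by simp
    fix e d :: real and n :: nat
    assume H: "0 < e \<and> e < 1 \<and> 0 < d \<and> d < 1 \<and> 0 < n \<and> real n \<ge> 512/r^2 * ln (11 / (e * d))"
    have "2 * ln (11/(e*d)) = (r^2/256) * (512/r^2 * ln (11 / (e * d)))" using r0 by (simp add: field_simps)
    also have "\<dots> \<le> (r^2/256) * real n" using H r0 by (intro mult_left_mono) auto
    finally have n: "2 * ln (11/(e*d)) \<le> real n * (p*(1-q))^2/256" unfolding r_def by (simp add: mult.commute)
    show "measure (sample_space p q n)
         {\<omega> \<in> space (sample_space p q n).
            \<forall>z \<in> {-1..1::real}. \<exists>I \<subseteq> {..<n}.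
              \<bar>z - (\<Sum>i<n. Mv \<omega> i * M'v \<omega> i * Xv \<omega> i)
                 - (\<Sum>i\<in>I. Mv \<omega> i * (1 - M'v \<omega> i) * Xv \<omega> i)\<bar> \<le> e}
         \<ge> 1 - d"
      using main_bound[of e d n] H n by auto
  qed
qed


end
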